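(* Let $G$ be a finite non-abelian group admitting a GRR and let $m\ge 1$ be an integer. Then $G$ admits an $m$-GRR.
   Context: A group $G$ admits a GRR if there is a Cayley graph $\mathrm{Cay}(G,R)$ (vertex set $G$, edges $\{g,rg\}$, $R=R^{-1}$, $1\notin R$) whose automorphism group is isomorphic to $G$. An $m$-GRR for $G$ is a finite regular simple graph admitting a semiregular group of automorphisms isomorphic to $G$ with exactly $m$ orbits on vertices and whose full automorphism group is isomorphic to $G$. *)

theory Defs
  imports "HOL-Algebra.Algebra"
begin

definition simple_graph :: "'v set \<Rightarrow> ('v \<Rightarrow> 'v \<Rightarrow> bool) \<Rightarrow> bool" where
  "simple_graph V E \<longleftrightarrow>
     (\<forall>x y. E x y \<longrightarrow> x \<in> V \<and> y \<in> V) \<and>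
     (\<forall>x y. E x y \<longrightarrow> E y x) \<and>
     (\<forall>x. \<not> E x x)"

definition regular_graph :: "'v set \<Rightarrow> ('v \<Rightarrow> 'v \<Rightarrow> bool) \<Rightarrow> bool" where
  "regular_graph V E \<longleftrightarrow> (\<exists>k. \<forall>v\<in>V. card {w \<in> V. E v w} = k)"

definition graph_aut :: "'v set \<Rightarrow> ('v \<Rightarrow> 'v \<Rightarrow> bool) \<Rightarrow> ('v \<Rightarrow> 'v) \<Rightarrow> bool" where
  "graph_aut V E f \<longleftrightarrow>
     bij_betw f V V \<and>
     (\<forall>x\<in>V. \<forall>y\<in>V. E (f x) (f y) \<longleftrightarrow> E x y) \<and>
     (\<forall>x. x \<notin> V \<longrightarrow> f x = x)"

definition Aut_group :: "'v set \<Rightarrow> ('v \<Rightarrow> 'v \<Rightarrow> bool) \<Rightarrow> ('v \<Rightarrow> 'v) monoid" where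
  "Aut_group V E = \<lparr>carrier = {f. graph_aut V E f}, monoid.mult = (\<lambda>f g. f \<circ> g), monoid.one = id\<rparr>"

definition cayley_adj :: "('a, 'b) monoid_scheme \<Rightarrow> 'a set \<Rightarrow> 'a \<Rightarrow> 'a \<Rightarrow> bool" where
  "cayley_adj G R x y \<longleftrightarrow> x \<in> carrier G \<and> y \<in> carrier G \<and> (\<exists>r\<in>R. y = r \<otimes>\<^bsub>G\<^esub> x)"

definition admits_GRR :: "('a, 'b) monoid_scheme \<Rightarrow> bool" where
  "admits_GRR G \<longleftrightarrow>
     (\<exists>R. R \<subseteq> carrier G \<and> \<one>\<^bsub>G\<^esub> \<notin> R \<and> (\<forall>r\<in>R. inv\<^bsub>G\<^esub> r \<in> R) \<and>
          Aut_group (carrier G) (cayley_adj G R) \<cong> G)"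

definition orbits_of :: "('v \<Rightarrow> 'v) set \<Rightarrow> 'v set \<Rightarrow> 'v set set" where
  "orbits_of H V = (\<lambda>v. {h v | h. h \<in> H}) ` V"

definition semiregular_on :: "('v \<Rightarrow> 'v) set \<Rightarrow> 'v set \<Rightarrow> bool" where
  "semiregular_on H V \<longleftrightarrow> (\<forall>h\<in>H. \<forall>v\<in>V. h v = v \<longrightarrow> h = id)"

text \<open>Vertices of the graph are taken from nat (any finite graph is isomorphic to one on nat).\<close>
definition admits_mGRR :: "('a, 'b) monoid_scheme \<Rightarrow> nat \<Rightarrow> bool" where
  "admits_mGRR G m \<longleftrightarrow>
     (\<exists>(V :: nat set) E H.
        finite V \<and> simple_graph V E \<and> regular_graph V E \<and>
        subgroup H (Aut_group V E) \<and>
        semiregular_on H V \<and>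
        (Aut_group V E)\<lparr>carrier := H\<rparr> \<cong> G \<and>
        card (orbits_of H V) = m \<and>
        Aut_group V E \<cong> G)"

end

theory Submission
  imports Defs
begin

lemma graph_aut_id: "graph_aut V E id"
  by (simp add: graph_aut_def)

lemma graph_aut_comp:
  assumes "graph_aut V E f" "graph_aut V E g"
  shows "graph_aut V E (f \<circ> g)"
proof -
  have "bij_betw (f \<circ> g) V V" using assms unfolding graph_aut_def using bij_betw_trans by blast
  moreover have "\<forall>x\<in>V. \<forall>y\<in>V. E ((f \<circ> g) x) ((f \<circ> g) y) \<longleftrightarrow> E x y"
  proof (intro ballI)
    fix x y assume xy: "x \<in> V" "y \<in> V"
    have "g x \<in> V" "g y \<in> V" using assms xy unfolding graph_aut_def bij_betw_def by auto
    then show "E ((f \<circ> g) x) ((f \<circ> g) y) \<longleftrightarrow> E x y"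
      using assms xy unfolding graph_aut_def by simp
  qed
  moreover have "\<forall>x. x \<notin> V \<longrightarrow> (f \<circ> g) x = x" using assms unfolding graph_aut_def by auto
  ultimately show ?thesis unfolding graph_aut_def by blast
qed

definition aut_inv :: "'v set \<Rightarrow> ('v \<Rightarrow> 'v) \<Rightarrow> 'v \<Rightarrow> 'v" where
  "aut_inv V f = (\<lambda>x. if x \<in> V then inv_into V f x else x)"

lemma graph_aut_inv:
  assumes "graph_aut V E f"
  shows "graph_aut V E (aut_inv V f)" "aut_inv V f \<circ> f = id" "f \<circ> aut_inv V f = id"
proof -
  have b: "bij_betw f V V" and e: "\<forall>x\<in>V. \<forall>y\<in>V. E (f x) (f y) \<longleftrightarrow> E x y"
    and o: "\<forall>x. x \<notin> V \<longrightarrow> f x = x" using assms unfolding graph_aut_def by auto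
  have bi: "bij_betw (inv_into V f) V V" using b bij_betw_inv_into by blast
  have b2: "bij_betw (aut_inv V f) V V"
    using bi unfolding aut_inv_def by (rule bij_betw_cong[THEN iffD1, rotated]) auto
  have "\<forall>x\<in>V. \<forall>y\<in>V. E (aut_inv V f x) (aut_inv V f y) \<longleftrightarrow> E x y"
  proof (intro ballI)
    fix x y assume xy: "x \<in> V" "y \<in> V"
    have ix: "inv_into V f x \<in> V" "inv_into V f y \<in> V" using bi xy bij_betwE by blast+
    have "f (inv_into V f x) = x" "f (inv_into V f y) = y"
      using b xy by (simp_all add: bij_betw_inv_into_right)
    then show "E (aut_inv V f x) (aut_inv V f y) \<longleftrightarrow> E x y"
      using e ix xy unfolding aut_inv_def by metis
  qed
  then show "graph_aut V E (aut_inv V f)" using b2 unfolding graph_aut_def aut_inv_def by auto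
  show "aut_inv V f \<circ> f = id"
  proof
    fix x show "(aut_inv V f \<circ> f) x = id x"
    proof (cases "x \<in> V")
      case True
      then have "f x \<in> V" using b bij_betwE by blast
      then show ?thesis using True b unfolding aut_inv_def
        by (simp add: bij_betw_inv_into_left)
    next
      case False then show ?thesis using o unfolding aut_inv_def by simp
    qed
  qed
  show "f \<circ> aut_inv V f = id"
  proof
    fix x show "(f \<circ> aut_inv V f) x = id x"
    proof (cases "x \<in> V")
      case True
      then show ?thesis using b unfolding aut_inv_def
        by (simp add: bij_betw_inv_into_right)
    next
      case False then show ?thesis using o unfolding aut_inv_def by simp
    qed
  qed
qed

lemma group_Aut: "group (Aut_group V E)"
proof (rule groupI)
  show "\<And>x y. x \<in> carrier (Aut_group V E) \<Longrightarrow> y \<in> carrier (Aut_group V E) \<Longrightarrow>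
      x \<otimes>\<^bsub>Aut_group V E\<^esub> y \<in> carrier (Aut_group V E)"
    by (simp add: Aut_group_def graph_aut_comp)
  show "\<one>\<^bsub>Aut_group V E\<^esub> \<in> carrier (Aut_group V E)"
    by (simp add: Aut_group_def graph_aut_id)
  show "\<And>x y z. x \<in> carrier (Aut_group V E) \<Longrightarrow> y \<in> carrier (Aut_group V E) \<Longrightarrow> z \<in> carrier (Aut_group V E) \<Longrightarrow>
      x \<otimes>\<^bsub>Aut_group V E\<^esub> y \<otimes>\<^bsub>Aut_group V E\<^esub> z = x \<otimes>\<^bsub>Aut_group V E\<^esub> (y \<otimes>\<^bsub>Aut_group V E\<^esub> z)"
    by (simp add: Aut_group_def comp_assoc)
  show "\<And>x. x \<in> carrier (Aut_group V E) \<Longrightarrow> \<one>\<^bsub>Aut_group V E\<^esub> \<otimes>\<^bsub>Aut_group V E\<^esub> x = x"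
    by (simp add: Aut_group_def)
  show "\<And>x. x \<in> carrier (Aut_group V E) \<Longrightarrow> \<exists>y\<in>carrier (Aut_group V E). y \<otimes>\<^bsub>Aut_group V E\<^esub> x = \<one>\<^bsub>Aut_group V E\<^esub>"
    using graph_aut_inv by (fastforce simp: Aut_group_def)
qed

lemma transfer_mGRR:
  fixes V0 :: "'v set" and E0 :: "'v \<Rightarrow> 'v \<Rightarrow> bool" and G :: "('a, 'b) monoid_scheme"
  assumes fin: "finite V0" and sg: "simple_graph V0 E0" and rg: "regular_graph V0 E0"
    and iso0: "Aut_group V0 E0 \<cong> G"
    and semi: "semiregular_on (carrier (Aut_group V0 E0)) V0"
    and orb: "card (orbits_of (carrier (Aut_group V0 E0)) V0) = m"
  shows "admits_mGRR G m"
proof -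
  obtain h where hb: "bij_betw h {0..<card V0} V0" using ex_bij_betw_nat_finite[OF fin] by blast
  define V where "V = {0..<card V0}"
  define E where "E = (\<lambda>u v. u \<in> V \<and> v \<in> V \<and> E0 (h u) (h v))"
  define h' where "h' = inv_into V h"
  have hV: "\<And>u. u \<in> V \<Longrightarrow> h u \<in> V0" using hb unfolding V_def bij_betw_def by auto
  have h'V: "\<And>x. x \<in> V0 \<Longrightarrow> h' x \<in> V" using hb unfolding V_def h'_def
    by (meson bij_betwE bij_betw_inv_into)
  have hh': "\<And>x. x \<in> V0 \<Longrightarrow> h (h' x) = x" using hb unfolding V_def h'_def
    by (simp add: bij_betw_inv_into_right)
  have h'h: "\<And>u. u \<in> V \<Longrightarrow> h' (h u) = u" using hb unfolding V_def h'_def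
    by (simp add: bij_betw_inv_into_left)
  have hinj: "inj_on h V" using hb unfolding V_def bij_betw_def by auto
  have E0V: "\<And>x y. E0 x y \<Longrightarrow> x \<in> V0 \<and> y \<in> V0" using sg unfolding simple_graph_def by blast
  define \<Phi> where "\<Phi> = (\<lambda>f x. if x \<in> V0 then h (f (h' x)) else x)"
  define \<Psi> where "\<Psi> = (\<lambda>f0 u. if u \<in> V then h' (f0 (h u)) else u)"
  have \<Phi>aut: "graph_aut V0 E0 (\<Phi> f)" if f: "graph_aut V E f" for f
  proof -
    have fb: "bij_betw f V V" and fe: "\<forall>x\<in>V. \<forall>y\<in>V. E (f x) (f y) \<longleftrightarrow> E x y"
      and fo: "\<forall>x. x \<notin> V \<longrightarrow> f x = x" using f unfolding graph_aut_def by auto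
    have fV: "\<And>u. u \<in> V \<Longrightarrow> f u \<in> V" using fb bij_betwE by blast
    have "bij_betw (h \<circ> f \<circ> h') V0 V0"
      using hb fb unfolding V_def h'_def
      by (meson bij_betw_inv_into bij_betw_trans)
    then have b: "bij_betw (\<Phi> f) V0 V0" unfolding \<Phi>_def
      by (rule bij_betw_cong[THEN iffD1, rotated]) auto
    have "\<forall>x\<in>V0. \<forall>y\<in>V0. E0 (\<Phi> f x) (\<Phi> f y) \<longleftrightarrow> E0 x y"
    proof (intro ballI)
      fix x y assume xy: "x \<in> V0" "y \<in> V0"
      have "E0 (\<Phi> f x) (\<Phi> f y) \<longleftrightarrow> E (f (h' x)) (f (h' y))"
        unfolding \<Phi>_def E_def using xy fV h'V by auto
      also have "\<dots> \<longleftrightarrow> E (h' x) (h' y)" using fe xy h'V by auto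
      also have "\<dots> \<longleftrightarrow> E0 x y" unfolding E_def using xy h'V hh' by auto
      finally show "E0 (\<Phi> f x) (\<Phi> f y) \<longleftrightarrow> E0 x y" .
    qed
    then show ?thesis using b unfolding graph_aut_def \<Phi>_def by auto
  qed
  have \<Psi>aut: "graph_aut V E (\<Psi> f0)" and \<Phi>\<Psi>: "\<Phi> (\<Psi> f0) = f0" if f0: "graph_aut V0 E0 f0" for f0
  proof -
    have fb: "bij_betw f0 V0 V0" and fe: "\<forall>x\<in>V0. \<forall>y\<in>V0. E0 (f0 x) (f0 y) \<longleftrightarrow> E0 x y"
      and fo: "\<forall>x. x \<notin> V0 \<longrightarrow> f0 x = x" using f0 unfolding graph_aut_def by auto
    have fV: "\<And>u. u \<in> V0 \<Longrightarrow> f0 u \<in> V0" using fb bij_betwE by blast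
    have "bij_betw (h' \<circ> f0 \<circ> h) V V"
      using hb fb unfolding V_def h'_def
      by (meson bij_betw_inv_into bij_betw_trans)
    then have b: "bij_betw (\<Psi> f0) V V" unfolding \<Psi>_def
      by (rule bij_betw_cong[THEN iffD1, rotated]) auto
    have "\<forall>x\<in>V. \<forall>y\<in>V. E (\<Psi> f0 x) (\<Psi> f0 y) \<longleftrightarrow> E x y"
      unfolding \<Psi>_def E_def using fe fV hV h'V hh' by auto
    then show "graph_aut V E (\<Psi> f0)" using b unfolding graph_aut_def \<Psi>_def by auto
    show "\<Phi> (\<Psi> f0) = f0"
    proof
      fix x show "\<Phi> (\<Psi> f0) x = f0 x"
        unfolding \<Phi>_def \<Psi>_def using fo fV h'V hh' h'h by auto
    qed
  qed
  have \<Phi>inj: "f = g" if "graph_aut V E f" "graph_aut V E g" "\<Phi> f = \<Phi> g" for f g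
  proof
    fix u show "f u = g u"
    proof (cases "u \<in> V")
      case True
      have "\<Phi> f (h u) = \<Phi> g (h u)" using that by simp
      then have "h (f u) = h (g u)" unfolding \<Phi>_def using True hV h'h by simp
      moreover have "f u \<in> V" "g u \<in> V" using that True unfolding graph_aut_def by (auto dest: bij_betwE)
      ultimately show ?thesis using hinj True by (meson inj_onD)
    next
      case False then show ?thesis using that unfolding graph_aut_def by auto
    qed
  qed
  have \<Phi>comp: "\<Phi> (f \<circ> g) = \<Phi> f \<circ> \<Phi> g" if "graph_aut V E f" "graph_aut V E g" for f g
  proof
    fix x
    have gV: "\<And>u. u \<in> V \<Longrightarrow> g u \<in> V" using that unfolding graph_aut_def by (auto dest: bij_betwE)
    show "\<Phi> (f \<circ> g) x = (\<Phi> f \<circ> \<Phi> g) x"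
      unfolding \<Phi>_def using gV hV h'V h'h by auto
  qed
  have isoA: "\<Phi> \<in> iso (Aut_group V E) (Aut_group V0 E0)"
  proof (rule isoI)
    show "\<Phi> \<in> hom (Aut_group V E) (Aut_group V0 E0)"
      unfolding hom_def using \<Phi>aut \<Phi>comp by (auto simp: Aut_group_def)
    show "bij_betw \<Phi> (carrier (Aut_group V E)) (carrier (Aut_group V0 E0))"
      unfolding bij_betw_def inj_on_def Aut_group_def using \<Phi>aut \<Phi>inj \<Psi>aut \<Phi>\<Psi>
      by (auto simp: image_iff) (metis)
  qed
  have isoG: "Aut_group V E \<cong> G" using isoA iso0 is_isoI iso_trans by blast
  have sgV: "simple_graph V E" using sg unfolding simple_graph_def E_def by auto
  have rgV: "regular_graph V E"
  proof -
    obtain k where k: "\<forall>v\<in>V0. card {w \<in> V0. E0 v w} = k" using rg unfolding regular_graph_def by blast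
    have "card {w \<in> V. E u w} = k" if u: "u \<in> V" for u
    proof -
      have "h ` {w \<in> V. E u w} = {w \<in> V0. E0 (h u) w}"
        unfolding E_def using u hV h'V hh' by (auto simp: image_iff) (metis)
      moreover have "inj_on h {w \<in> V. E u w}" using hinj by (rule inj_on_subset) auto
      ultimately have "card {w \<in> V. E u w} = card {w \<in> V0. E0 (h u) w}" by (metis card_image)
      then show ?thesis using k hV u by simp
    qed
    then show ?thesis unfolding regular_graph_def by blast
  qed
  have id_aut: "graph_aut V E id" by (rule graph_aut_id)
  have \<Phi>id: "\<Phi> id = id" unfolding \<Phi>_def using hh' by auto
  have semiV: "semiregular_on (carrier (Aut_group V E)) V"
    unfolding semiregular_on_def
  proof (intro ballI impI)
    fix f u assume f: "f \<in> carrier (Aut_group V E)" and u: "u \<in> V" and fu: "f u = u"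
    have fa: "graph_aut V E f" using f by (simp add: Aut_group_def)
    have "\<Phi> f (h u) = h u" unfolding \<Phi>_def using u hV h'h fu by simp
    then have "\<Phi> f = id" using semi \<Phi>aut[OF fa] hV u unfolding semiregular_on_def Aut_group_def by auto
    then show "f = id" using \<Phi>inj[OF fa id_aut] \<Phi>id by simp
  qed
  have orbV: "card (orbits_of (carrier (Aut_group V E)) V) = m"
  proof -
    define HV where "HV = carrier (Aut_group V E)"
    define H0 where "H0 = carrier (Aut_group V0 E0)"
    have orbsub: "orbits_of HV V \<subseteq> Pow V"
      unfolding orbits_of_def HV_def Aut_group_def graph_aut_def by (auto dest: bij_betwE)
    have key: "{f0 (h u) |f0. f0 \<in> H0} = h ` {f u |f. f \<in> HV}" if u: "u \<in> V" for u
    proof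
      show "{f0 (h u) |f0. f0 \<in> H0} \<subseteq> h ` {f u |f. f \<in> HV}"
      proof
        fix y assume "y \<in> {f0 (h u) |f0. f0 \<in> H0}"
        then obtain f0 where f0: "graph_aut V0 E0 f0" "y = f0 (h u)" by (auto simp: Aut_group_def HV_def H0_def)
        have "y = \<Phi> (\<Psi> f0) (h u)" using \<Phi>\<Psi>[OF f0(1)] f0 by simp
        also have "\<dots> = h (\<Psi> f0 u)" unfolding \<Phi>_def using u hV h'h by simp
        finally show "y \<in> h ` {f u |f. f \<in> HV}" using \<Psi>aut[OF f0(1)] by (auto simp: Aut_group_def HV_def H0_def)
      qed
      show "h ` {f u |f. f \<in> HV} \<subseteq> {f0 (h u) |f0. f0 \<in> H0}"
      proof
        fix y assume "y \<in> h ` {f u |f. f \<in> HV}"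
        then obtain f where f: "graph_aut V E f" "y = h (f u)" by (auto simp: Aut_group_def HV_def H0_def)
        have "y = \<Phi> f (h u)" unfolding \<Phi>_def using f u hV h'h by simp
        then show "y \<in> {f0 (h u) |f0. f0 \<in> H0}" using \<Phi>aut[OF f(1)] by (auto simp: Aut_group_def HV_def H0_def)
      qed
    qed
    have V0eq: "V0 = h ` V" using hb unfolding V_def bij_betw_def by simp
    have "orbits_of H0 V0 = (\<lambda>S. h ` S) ` orbits_of HV V"
      unfolding orbits_of_def V0eq image_image using key by (auto simp: image_iff)
    moreover have "inj_on (\<lambda>S. h ` S) (orbits_of HV V)"
      using inj_on_image_Pow[OF hinj] orbsub by (rule inj_on_subset)
    ultimately show ?thesis using orb unfolding HV_def H0_def by (simp add: card_image)
  qed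
  have grp: "group (Aut_group V E)" by (rule group_Aut)
  have sub: "subgroup (carrier (Aut_group V E)) (Aut_group V E)"
    using group.subgroup_self[OF grp] .
  have upd: "(Aut_group V E)\<lparr>carrier := carrier (Aut_group V E)\<rparr> = Aut_group V E"
    by (simp add: Aut_group_def)
  have finV: "finite V" unfolding V_def by simp
  show ?thesis unfolding admits_mGRR_def
    using finV sgV rgV sub semiV upd isoG orbV by metis
qed

locale grr = group G for G :: "('a, 'b) monoid_scheme" (structure) +
  fixes R :: "'a set"
  assumes finG: "finite (carrier G)"
    and Rsub: "R \<subseteq> carrier G"
    and one_notin: "\<one> \<notin> R"
    and Rinv: "\<And>x. x \<in> R \<Longrightarrow> inv x \<in> R"
    and isoR: "Aut_group (carrier G) (cayley_adj G R) \<cong> G"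
begin

lemma cay_iff: "cayley_adj G R x y \<longleftrightarrow> x \<in> carrier G \<and> y \<in> carrier G \<and> y \<otimes> inv x \<in> R"
proof
  assume "cayley_adj G R x y"
  then obtain s where s: "s \<in> R" "y = s \<otimes> x" "x \<in> carrier G" "y \<in> carrier G"
    unfolding cayley_adj_def by auto
  have "y \<otimes> inv x = s" using s Rsub by (simp add: m_assoc subsetD)
  then show "x \<in> carrier G \<and> y \<in> carrier G \<and> y \<otimes> inv x \<in> R" using s by simp
next
  assume h: "x \<in> carrier G \<and> y \<in> carrier G \<and> y \<otimes> inv x \<in> R"
  then have "y = (y \<otimes> inv x) \<otimes> x" by (simp add: m_assoc)
  then show "cayley_adj G R x y" unfolding cayley_adj_def using h by blast
qed

lemma inv_cancel_l [simp]: "x \<in> carrier G \<Longrightarrow> y \<in> carrier G \<Longrightarrow> inv x \<otimes> (x \<otimes> y) = y"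
  by (simp add: m_assoc[symmetric])

lemma inv_cancel_r [simp]: "x \<in> carrier G \<Longrightarrow> y \<in> carrier G \<Longrightarrow> x \<otimes> (inv x \<otimes> y) = y"
  by (simp add: m_assoc[symmetric])

lemma rcancel_iff [simp]: "x \<in> carrier G \<Longrightarrow> y \<in> carrier G \<Longrightarrow> g \<in> carrier G \<Longrightarrow> x \<otimes> g = y \<otimes> g \<longleftrightarrow> x = y"
proof
  assume h: "x \<in> carrier G" "y \<in> carrier G" "g \<in> carrier G" "x \<otimes> g = y \<otimes> g"
  then have "x \<otimes> g \<otimes> inv g = y \<otimes> g \<otimes> inv g" by simp
  then show "x = y" using h by (simp add: m_assoc)
qed simp

lemma lcancel_iff [simp]: "x \<in> carrier G \<Longrightarrow> y \<in> carrier G \<Longrightarrow> g \<in> carrier G \<Longrightarrow> g \<otimes> x = g \<otimes> y \<longleftrightarrow> x = y"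
proof
  assume h: "x \<in> carrier G" "y \<in> carrier G" "g \<in> carrier G" "g \<otimes> x = g \<otimes> y"
  then have "inv g \<otimes> (g \<otimes> x) = inv g \<otimes> (g \<otimes> y)" by simp
  then show "x = y" using h by simp
qed simp

definition rho :: "'a \<Rightarrow> 'a \<Rightarrow> 'a" where
  "rho b = (\<lambda>x. if x \<in> carrier G then x \<otimes> b else x)"

lemma bij_mult_right: "b \<in> carrier G \<Longrightarrow> bij_betw (\<lambda>x. x \<otimes> b) (carrier G) (carrier G)"
  by (rule bij_betwI[where g="\<lambda>x. x \<otimes> inv b"]) (auto simp: m_assoc)

lemma bij_mult_left: "b \<in> carrier G \<Longrightarrow> bij_betw (\<lambda>x. b \<otimes> x) (carrier G) (carrier G)"
  by (rule bij_betwI[where g="\<lambda>x. inv b \<otimes> x"]) (auto simp: m_assoc[symmetric])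

lemma rho_aut: "b \<in> carrier G \<Longrightarrow> graph_aut (carrier G) (cayley_adj G R) (rho b)"
  unfolding graph_aut_def
proof (intro conjI ballI allI impI)
  assume b: "b \<in> carrier G"
  show "bij_betw (rho b) (carrier G) (carrier G)"
    using bij_mult_right[OF b] unfolding rho_def
    by (rule bij_betw_cong[THEN iffD1, rotated]) auto
  fix x y assume xy: "x \<in> carrier G" "y \<in> carrier G"
  have "y \<otimes> b \<otimes> inv (x \<otimes> b) = y \<otimes> inv x" using xy b
    by (simp add: inv_mult_group m_assoc[symmetric]) (simp add: m_assoc)
  then show "cayley_adj G R (rho b x) (rho b y) = cayley_adj G R x y"
    unfolding cay_iff rho_def using xy b by simp
next
  fix x assume "x \<notin> carrier G" then show "rho b x = x" unfolding rho_def by simp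
qed

lemma aut_is_rho:
  assumes f: "graph_aut (carrier G) (cayley_adj G R) f"
  shows "\<exists>b\<in>carrier G. f = rho b"
proof -
  let ?A = "carrier (Aut_group (carrier G) (cayley_adj G R))"
  have cardA: "card ?A = card (carrier G)" using iso_same_card[OF isoR] .
  have finA: "finite ?A" using iso_finite[OF isoR] finG by simp
  have sub: "rho ` carrier G \<subseteq> ?A" using rho_aut by (auto simp: Aut_group_def)
  have inj: "inj_on rho (carrier G)"
  proof (rule inj_onI)
    fix x y assume "x \<in> carrier G" "y \<in> carrier G" "rho x = rho y"
    then have "rho x \<one> = rho y \<one>" by simp
    then show "x = y" using \<open>x \<in> carrier G\<close> \<open>y \<in> carrier G\<close> unfolding rho_def by simp
  qed
  have "card (rho ` carrier G) = card ?A" using card_image[OF inj] cardA by simp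
  then have "rho ` carrier G = ?A" using card_subset_eq[OF finA sub] by simp
  moreover have "f \<in> ?A" using f by (simp add: Aut_group_def)
  ultimately show ?thesis by auto
qed

lemma exists_twist:
  assumes nc: "\<not> comm_group G"
  shows "\<exists>a\<in>carrier G. \<exists>r\<in>R. a \<otimes> r \<otimes> inv a \<notin> R"
proof (rule ccontr)
  assume "\<not> ?thesis"
  then have conj: "\<And>a s. a \<in> carrier G \<Longrightarrow> s \<in> R \<Longrightarrow> a \<otimes> s \<otimes> inv a \<in> R" by blast
  have comm: "a \<otimes> x = x \<otimes> a" if a: "a \<in> carrier G" and x: "x \<in> carrier G" for a x
  proof -
    define la where "la = (\<lambda>x. if x \<in> carrier G then a \<otimes> x else x)"
    have "graph_aut (carrier G) (cayley_adj G R) la"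
      unfolding graph_aut_def
    proof (intro conjI ballI allI impI)
      show "bij_betw la (carrier G) (carrier G)"
        using bij_mult_left[OF a] unfolding la_def
        by (rule bij_betw_cong[THEN iffD1, rotated]) auto
      fix u v assume uv: "u \<in> carrier G" "v \<in> carrier G"
      have e: "a \<otimes> v \<otimes> inv (a \<otimes> u) = a \<otimes> (v \<otimes> inv u) \<otimes> inv a" using uv a
        by (simp add: inv_mult_group m_assoc)
      have e2: "inv a \<otimes> (a \<otimes> (v \<otimes> inv u) \<otimes> inv a) \<otimes> inv (inv a) = v \<otimes> inv u" using uv a
        by (simp add: m_assoc)
      have "a \<otimes> (v \<otimes> inv u) \<otimes> inv a \<in> R \<longleftrightarrow> v \<otimes> inv u \<in> R"
        using conj[of a "v \<otimes> inv u"] conj[of "inv a" "a \<otimes> (v \<otimes> inv u) \<otimes> inv a"] e2 a by auto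
      then show "cayley_adj G R (la u) (la v) = cayley_adj G R u v"
        unfolding cay_iff la_def using uv a e by simp
    next
      fix u assume "u \<notin> carrier G" then show "la u = u" unfolding la_def by simp
    qed
    then obtain b where b: "b \<in> carrier G" "la = rho b" using aut_is_rho by blast
    have "la \<one> = rho b \<one>" using b by simp
    then have ab: "a = b" unfolding la_def rho_def using a b by simp
    have "la x = rho b x" using b by simp
    then show ?thesis unfolding la_def rho_def using x ab by simp
  qed
  have "comm_group G" by (rule group_comm_groupI) (use comm in auto)
  then show False using nc by simp
qed

end

lemma card_eq_witness:
  assumes "\<And>x. x \<in> A \<Longrightarrow> f x \<in> B" "\<And>y. y \<in> B \<Longrightarrow> g y \<in> A"
    "\<And>x. x \<in> A \<Longrightarrow> g (f x) = x" "\<And>y. y \<in> B \<Longrightarrow> f (g y) = y"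
  shows "card A = card B"
proof -
  have "bij_betw f A B" by (rule bij_betw_byWitness[where f'=g]) (use assms in auto)
  then show ?thesis by (rule bij_betw_same_card)
qed

locale con = grr +
  fixes a r :: 'a and m :: nat
  assumes a_car: "a \<in> carrier G" and r_R: "r \<in> R" and tw: "a \<otimes> r \<otimes> inv a \<notin> R"
    and m1: "1 \<le> m"
begin

lemma r_car: "r \<in> carrier G" using r_R Rsub by auto

definition invs :: "'a set \<Rightarrow> 'a set" where "invs Q = (\<lambda>x. inv x) ` Q"

definition T :: "'a set" where "T = {\<one>, a, a \<otimes> r}"
definition T' :: "'a set" where "T' = invs T"

definition nx :: "nat \<Rightarrow> nat" where "nx i = Suc i mod m"
definition pv :: "nat \<Rightarrow> nat" where "pv i = (i + m - 1) mod m"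

definition S :: "nat \<Rightarrow> 'a set" where "S i = (if i = 1 then T' else T)"

definition C :: "nat \<Rightarrow> nat \<Rightarrow> 'a set" where
  "C i j = (if i = j then R else if j = nx i then S i else if i = nx j then invs (S j) else {})"

definition V0 :: "('a \<times> nat) set" where "V0 = carrier G \<times> {..<m}"

definition E0 :: "'a \<times> nat \<Rightarrow> 'a \<times> nat \<Rightarrow> bool" where
  "E0 v w \<longleftrightarrow> v \<in> V0 \<and> w \<in> V0 \<and> fst w \<otimes> inv (fst v) \<in> C (snd v) (snd w)"

lemma a_ne_one: "a \<noteq> \<one>"
proof
  assume "a = \<one>" then have "a \<otimes> r \<otimes> inv a = r" using r_car by simp
  then show False using tw r_R by simp
qed

lemma ar_ne_one: "a \<otimes> r \<noteq> \<one>"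
proof
  assume h: "a \<otimes> r = \<one>"
  then have "inv r = a" using a_car r_car by (simp add: inv_equality)
  then have "inv a = r" using r_car by auto
  then have "a \<otimes> r \<otimes> inv a = r" using h a_car r_car by simp
  then show False using tw r_R by simp
qed

lemma a_ne_ar: "a \<noteq> a \<otimes> r"
proof
  assume "a = a \<otimes> r" then have "r = \<one>" using a_car r_car by simp
  then show False using r_R one_notin by simp
qed

lemma T_sub: "T \<subseteq> carrier G" unfolding T_def using a_car r_car by auto

lemma invs_sub: "Q \<subseteq> carrier G \<Longrightarrow> invs Q \<subseteq> carrier G" unfolding invs_def by auto

lemma invs_invs: "Q \<subseteq> carrier G \<Longrightarrow> invs (invs Q) = Q"
proof -
  assume Q: "Q \<subseteq> carrier G"
  have "invs (invs Q) = (\<lambda>x. inv (inv x)) ` Q" unfolding invs_def image_image ..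
  also have "\<dots> = (\<lambda>x. x) ` Q" using Q by (intro image_cong) (auto dest: subsetD)
  finally show ?thesis by simp
qed

lemma mem_invs: "Q \<subseteq> carrier G \<Longrightarrow> x \<in> carrier G \<Longrightarrow> x \<in> invs Q \<longleftrightarrow> inv x \<in> Q"
proof
  assume Q: "Q \<subseteq> carrier G" and x: "x \<in> carrier G" and "x \<in> invs Q"
  then obtain q where "q \<in> Q" "x = inv q" unfolding invs_def by auto
  then show "inv x \<in> Q" using Q by (auto dest: subsetD)
next
  assume Q: "Q \<subseteq> carrier G" and x: "x \<in> carrier G" and "inv x \<in> Q"
  then have "inv (inv x) \<in> invs Q" unfolding invs_def by blast
  then show "x \<in> invs Q" using x by simp
qed

lemma invs_R: "invs R = R"
proof
  show "invs R \<subseteq> R" unfolding invs_def using Rinv by auto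
  show "R \<subseteq> invs R"
  proof
    fix x assume "x \<in> R"
    then show "x \<in> invs R" using mem_invs[OF Rsub] Rinv Rsub by auto
  qed
qed

lemma T'_sub: "T' \<subseteq> carrier G" unfolding T'_def using invs_sub T_sub by blast

lemma card_T: "card T = 3" unfolding T_def using a_ne_one ar_ne_one a_ne_ar by auto

lemma card_invs: "Q \<subseteq> carrier G \<Longrightarrow> card (invs Q) = card Q"
  unfolding invs_def
proof (rule card_image, rule inj_onI)
  fix x y assume "Q \<subseteq> carrier G" "x \<in> Q" "y \<in> Q" "inv x = inv y"
  then have "inv (inv x) = inv (inv y)" "x \<in> carrier G" "y \<in> carrier G" by auto
  then show "x = y" by simp
qed

lemma card_T': "card T' = 3" unfolding T'_def using card_invs T_sub card_T by simp

lemma S_sub: "S i \<subseteq> carrier G" unfolding S_def using T_sub T'_sub by auto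

lemma C_sub: "C i j \<subseteq> carrier G" unfolding C_def using S_sub Rsub invs_sub by auto

lemma C_car: "c \<in> C i j \<Longrightarrow> c \<in> carrier G" using C_sub by auto

lemma nx_lt: "i < m \<Longrightarrow> nx i < m" unfolding nx_def using m1 by simp
lemma pv_lt: "i < m \<Longrightarrow> pv i < m" unfolding pv_def using m1 by simp
lemma nx_pv: "i < m \<Longrightarrow> nx (pv i) = i"
proof -
  assume i: "i < m"
  show ?thesis
  proof (cases i)
    case 0 then show ?thesis unfolding nx_def pv_def using m1 by simp
  next
    case (Suc k) then show ?thesis unfolding nx_def pv_def using m1 i by simp
  qed
qed

lemma pv_nx: "i < m \<Longrightarrow> pv (nx i) = i"
proof -
  assume i: "i < m"
  show ?thesis
  proof (cases "Suc i = m")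
    case True then show ?thesis unfolding nx_def pv_def using m1 by simp
  next
    case False then have "Suc i < m" using i by simp
    then show ?thesis unfolding nx_def pv_def by simp
  qed
qed

lemma nx_ne: "2 \<le> m \<Longrightarrow> i < m \<Longrightarrow> nx i \<noteq> i"
proof -
  assume m: "2 \<le> m" and i: "i < m"
  show ?thesis
  proof (cases "Suc i = m")
    case True then show ?thesis unfolding nx_def using m by simp
  next
    case False then have "Suc i < m" using i by simp
    then show ?thesis unfolding nx_def by simp
  qed
qed


lemma nx_nx: "nx (nx i) = (i + 2) mod m" unfolding nx_def by (simp add: mod_Suc_eq)

lemma nx_nx_nx: "nx (nx (nx i)) = (i + 3) mod m" unfolding nx_def by (simp add: mod_Suc_eq eval_nat_numeral)

lemma nx_nx_ne: "3 \<le> m \<Longrightarrow> i < m \<Longrightarrow> nx (nx i) \<noteq> i"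
proof
  assume m: "3 \<le> m" and i: "i < m" and e: "nx (nx i) = i"
  then have e2: "(i + 2) mod m = i" using nx_nx by simp
  show False
  proof (cases "i + 2 < m")
    case True then show False using e2 by simp
  next
    case False
    then have "(i + 2) mod m = (i + 2 - m) mod m" by (simp add: le_mod_geq)
    also have "\<dots> = i + 2 - m" using i m by (intro mod_less) linarith
    finally show False using e2 m False by linarith
  qed
qed

lemma nx3_ne: "4 \<le> m \<Longrightarrow> i < m \<Longrightarrow> nx (nx (nx i)) \<noteq> i"
proof
  assume m: "4 \<le> m" and i: "i < m" and e: "nx (nx (nx i)) = i"
  then have e2: "(i + 3) mod m = i" using nx_nx_nx by simp
  show False
  proof (cases "i + 3 < m")
    case True then show False using e2 by simp
  next
    case False
    then have "(i + 3) mod m = (i + 3 - m) mod m" by (simp add: le_mod_geq)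
    also have "\<dots> = i + 3 - m" using i m by (intro mod_less) linarith
    finally show False using e2 m False by linarith
  qed
qed

lemma pv_ne: "2 \<le> m \<Longrightarrow> i < m \<Longrightarrow> pv i \<noteq> i"
  using nx_ne nx_pv pv_lt by metis

lemma pv_ne_nx: "3 \<le> m \<Longrightarrow> i < m \<Longrightarrow> pv i \<noteq> nx i"
  using nx_nx_ne nx_pv pv_lt by metis

lemma pv_eq_nx2: "m = 2 \<Longrightarrow> i < m \<Longrightarrow> pv i = nx i"
  unfolding nx_def pv_def by (cases i) auto

lemma pv_eq_nxnx3: "m = 3 \<Longrightarrow> i < m \<Longrightarrow> pv i = nx (nx i)"
  using nx_pv pv_lt nx_nx_nx by (metis add.commute mod_add_self2 mod_less)

lemma pv_ne_nxnx4: "4 \<le> m \<Longrightarrow> i < m \<Longrightarrow> pv i \<noteq> nx (nx i)"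
  using nx3_ne nx_pv pv_lt by metis

lemma C_ii [simp]: "C i i = R" unfolding C_def by simp

lemma C_nx: "2 \<le> m \<Longrightarrow> i < m \<Longrightarrow> C i (nx i) = S i"
  unfolding C_def using nx_ne[of i] by auto

lemma C_pv: "3 \<le> m \<Longrightarrow> i < m \<Longrightarrow> C i (pv i) = invs (S (pv i))"
  unfolding C_def using pv_ne[of i] pv_ne_nx[of i] nx_pv[of i] by auto

lemma C_out: "i < m \<Longrightarrow> j < m \<Longrightarrow> j \<noteq> i \<Longrightarrow> j \<noteq> nx i \<Longrightarrow> j \<noteq> pv i \<Longrightarrow> C i j = {}"
  unfolding C_def using pv_nx by auto

lemma invs_T': "invs T' = T" unfolding T'_def using invs_invs T_sub by simp

lemma C_nx_gen: "i \<noteq> j \<Longrightarrow> j = nx i \<Longrightarrow> C i j = S i" unfolding C_def by simp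
lemma C_pv_gen: "i \<noteq> j \<Longrightarrow> j \<noteq> nx i \<Longrightarrow> i = nx j \<Longrightarrow> C i j = invs (S j)" unfolding C_def by simp
lemma C_none: "i \<noteq> j \<Longrightarrow> j \<noteq> nx i \<Longrightarrow> i \<noteq> nx j \<Longrightarrow> C i j = {}" unfolding C_def by simp

lemma invs_empty: "invs {} = {}" unfolding invs_def by simp

lemma C_sym: assumes i: "i < m" and j: "j < m" shows "C j i = invs (C i j)"
proof (cases "i = j")
  case True then show ?thesis by (simp add: invs_R)
next
  case ij: False
  show ?thesis
  proof (cases "j = nx i")
    case jn: True
    show ?thesis
    proof (cases "i = nx j")
      case inj: True
      have "nx (nx i) = i" using jn inj by simp
      then have "m < 3" using nx_nx_ne i by (metis not_le)
      moreover have "2 \<le> m" using ij i j by linarith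
      ultimately have m2: "m = 2" by simp
      have c1: "C j i = S j" using C_nx_gen[of j i] ij inj by simp
      have c2: "C i j = S i" using C_nx_gen[of i j] ij jn by simp
      have "(i = 0 \<and> j = 1) \<or> (i = 1 \<and> j = 0)" using i j ij m2 by linarith
      then show ?thesis
      proof
        assume "i = 0 \<and> j = 1" then show ?thesis using c1 c2 by (simp add: S_def T'_def)
      next
        assume "i = 1 \<and> j = 0" then show ?thesis using c1 c2 by (simp add: S_def invs_T')
      qed
    next
      case False
      have c1: "C j i = invs (S i)" using C_pv_gen[of j i] ij jn False by simp
      have c2: "C i j = S i" using C_nx_gen[of i j] ij jn by simp
      show ?thesis using c1 c2 by simp
    qed
  next
    case jn: False
    show ?thesis
    proof (cases "i = nx j")
      case True
      have c1: "C j i = S j" using C_nx_gen[of j i] ij True by simp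
      have c2: "C i j = invs (S j)" using C_pv_gen[of i j] ij jn True by simp
      show ?thesis using c1 c2 invs_invs[OF S_sub] by simp
    next
      case False
      have c1: "C j i = {}" using C_none[of j i] ij jn False by simp
      have c2: "C i j = {}" using C_none[of i j] ij jn False by simp
      show ?thesis using c1 c2 invs_empty by simp
    qed
  qed
qed

lemma E0_iff: "E0 (g, i) (h, j) \<longleftrightarrow> g \<in> carrier G \<and> i < m \<and> h \<in> carrier G \<and> j < m \<and> h \<otimes> inv g \<in> C i j"
  unfolding E0_def V0_def by auto

lemma E0_sym: assumes e: "E0 x y" shows "E0 y x"
proof -
  obtain g i where x: "x = (g, i)" by (cases x)
  obtain h j where y: "y = (h, j)" by (cases y)
  have h: "g \<in> carrier G" "i < m" "h \<in> carrier G" "j < m" "h \<otimes> inv g \<in> C i j"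
    using e unfolding x y E0_iff by auto
  have "inv (h \<otimes> inv g) = g \<otimes> inv h" using h by (simp add: inv_mult_group)
  moreover have "inv (h \<otimes> inv g) \<in> invs (C i j)" using h(5) unfolding invs_def by blast
  ultimately have "g \<otimes> inv h \<in> C j i" using C_sym[OF h(2) h(4)] by simp
  then show ?thesis unfolding x y E0_iff using h by simp
qed

lemma E0_irr: "\<not> E0 x x"
proof
  assume e: "E0 x x"
  obtain g i where x: "x = (g, i)" by (cases x)
  have "g \<in> carrier G" "g \<otimes> inv g \<in> R" using e unfolding x E0_iff by auto
  then show False using one_notin by simp
qed

lemma sg: "simple_graph V0 E0"
  unfolding simple_graph_def using E0_sym E0_irr by (auto simp: E0_def)

lemma sum_supp:
  assumes i: "i < m" and z: "\<And>j. j < m \<Longrightarrow> j \<noteq> i \<Longrightarrow> j \<noteq> nx i \<Longrightarrow> j \<noteq> pv i \<Longrightarrow> f j = 0"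
  shows "(\<Sum>j<m. f j) = (if m = 1 then f i else if m = 2 then f i + f (nx i) else f i + f (nx i) + f (pv i))"
proof -
  have sub: "{i, nx i, pv i} \<subseteq> {..<m}" using i nx_lt pv_lt by auto
  have "(\<Sum>j<m. f j) = (\<Sum>j\<in>{i, nx i, pv i}. f j)"
  proof (rule sum.mono_neutral_right)
    show "\<forall>j\<in>{..<m} - {i, nx i, pv i}. f j = 0" using z by auto
  qed (use sub in auto)
  show ?thesis
  proof (cases "m = 1")
    case True
    then have "{i, nx i, pv i} = {i}" using i unfolding nx_def pv_def by auto
    then show ?thesis using True \<open>(\<Sum>j<m. f j) = _\<close> by simp
  next
    case m1': False
    show ?thesis
    proof (cases "m = 2")
      case True
      then have e: "{i, nx i, pv i} = {i, nx i}" using i pv_eq_nx2 by auto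
      have "nx i \<noteq> i" using i nx_ne True by simp
      then have "(\<Sum>j\<in>{i, nx i}. f j) = f i + f (nx i)" by simp
      then show ?thesis using True m1' e \<open>(\<Sum>j<m. f j) = _\<close> by simp
    next
      case False
      then have m3: "3 \<le> m" using m1 m1' by linarith
      have d: "nx i \<noteq> i" "pv i \<noteq> i" "pv i \<noteq> nx i" using i m3 nx_ne pv_ne pv_ne_nx by auto
      then have "(\<Sum>j\<in>{i, nx i, pv i}. f j) = f i + f (nx i) + f (pv i)" by (simp add: add.assoc)
      then show ?thesis using False m1' \<open>(\<Sum>j<m. f j) = _\<close> by simp
    qed
  qed
qed

definition deg0 :: nat where "deg0 = card R + (if m = 1 then 0 else if m = 2 then 3 else 6)"

lemma card_S: "card (S i) = 3" unfolding S_def using card_T card_T' by simp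

lemma sum_card_C: "i < m \<Longrightarrow> (\<Sum>j<m. card (C i j)) = deg0"
proof -
  assume i: "i < m"
  have eq: "(\<Sum>j<m. card (C i j)) = (if m = 1 then card (C i i) else if m = 2 then card (C i i) + card (C i (nx i))
      else card (C i i) + card (C i (nx i)) + card (C i (pv i)))"
    by (rule sum_supp[OF i]) (simp add: C_out i)
  show ?thesis
  proof (cases "m = 1")
    case True
    show ?thesis unfolding eq deg0_def if_P[OF True] by simp
  next
    case m1': False
    show ?thesis
    proof (cases "m = 2")
      case True
      have "card (C i (nx i)) = 3" using C_nx[OF _ i] card_S True by simp
      then show ?thesis unfolding eq deg0_def if_not_P[OF m1'] if_P[OF True] by simp
    next
      case False
      then have m3: "3 \<le> m" using m1 m1' by linarith
      have "card (C i (nx i)) = 3" "card (C i (pv i)) = 3"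
        using C_nx[OF _ i] C_pv[OF m3 i] card_S card_invs[OF S_sub] m3 by simp_all
      then show ?thesis unfolding eq deg0_def if_not_P[OF m1'] if_not_P[OF False] by simp
    qed
  qed
qed

lemma nbr_set: assumes g: "g \<in> carrier G" and i: "i < m"
  shows "{w \<in> V0. E0 (g, i) w} = (\<lambda>(j, c). (c \<otimes> g, j)) ` (SIGMA j:{..<m}. C i j)"
proof
  show "{w \<in> V0. E0 (g, i) w} \<subseteq> (\<lambda>(j, c). (c \<otimes> g, j)) ` (SIGMA j:{..<m}. C i j)"
  proof
    fix w assume w: "w \<in> {w \<in> V0. E0 (g, i) w}"
    obtain h j where hj: "w = (h, j)" by (cases w) auto
    have h: "h \<in> carrier G" "j < m" "h \<otimes> inv g \<in> C i j" using w hj E0_iff by auto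
    have "h = (h \<otimes> inv g) \<otimes> g" using h g by (simp add: m_assoc)
    then show "w \<in> (\<lambda>(j, c). (c \<otimes> g, j)) ` (SIGMA j:{..<m}. C i j)"
      using hj h by (auto simp: image_iff intro!: bexI[where x="(j, h \<otimes> inv g)"])
  qed
  show "(\<lambda>(j, c). (c \<otimes> g, j)) ` (SIGMA j:{..<m}. C i j) \<subseteq> {w \<in> V0. E0 (g, i) w}"
  proof
    fix w assume "w \<in> (\<lambda>(j, c). (c \<otimes> g, j)) ` (SIGMA j:{..<m}. C i j)"
    then obtain j c where jc: "j < m" "c \<in> C i j" "w = (c \<otimes> g, j)" by auto
    have c: "c \<in> carrier G" using jc C_sub by auto
    have "c \<otimes> g \<otimes> inv g = c" using c g by (simp add: m_assoc)
    then show "w \<in> {w \<in> V0. E0 (g, i) w}" using jc c g i by (simp add: E0_iff V0_def)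
  qed
qed

lemma degree: assumes g: "g \<in> carrier G" and i: "i < m"
  shows "card {w \<in> V0. E0 (g, i) w} = deg0"
proof -
  have inj: "inj_on (\<lambda>(j, c). (c \<otimes> g, j)) (SIGMA j:{..<m}. C i j)"
    unfolding inj_on_def using C_car g by auto
  have fin: "finite (C i j)" for j using C_sub finG finite_subset by blast
  have "card {w \<in> V0. E0 (g, i) w} = card (SIGMA j:{..<m}. C i j)"
    unfolding nbr_set[OF g i] using inj by (rule card_image)
  also have "\<dots> = (\<Sum>j<m. card (C i j))" by (rule card_SigmaI) (simp_all add: fin)
  also have "\<dots> = deg0" using sum_card_C i by simp
  finally show ?thesis .
qed

lemma rg: "regular_graph V0 E0"
  unfolding regular_graph_def using degree by (auto simp: V0_def)

end

definition tri :: "('v \<Rightarrow> 'v \<Rightarrow> bool) \<Rightarrow> 'v \<Rightarrow> nat" where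
  "tri E v = card {(u, w). E v u \<and> E v w \<and> E u w}"

lemma tri_aut:
  assumes sg: "simple_graph V E" and f: "graph_aut V E f" and v: "v \<in> V"
  shows "tri E (f v) = tri E v"
proof -
  have fb: "bij_betw f V V" and fe: "\<forall>x\<in>V. \<forall>y\<in>V. E (f x) (f y) \<longleftrightarrow> E x y"
    using f unfolding graph_aut_def by auto
  have EV: "\<And>x y. E x y \<Longrightarrow> x \<in> V \<and> y \<in> V" using sg unfolding simple_graph_def by blast
  let ?W = "{(u, w). E v u \<and> E v w \<and> E u w}"
  let ?W' = "{(u, w). E (f v) u \<and> E (f v) w \<and> E u w}"
  have fV: "\<And>x. x \<in> V \<Longrightarrow> f x \<in> V" using fb bij_betwE by blast
  have img: "?W' = (\<lambda>(u, w). (f u, f w)) ` ?W"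
  proof
    show "?W' \<subseteq> (\<lambda>(u, w). (f u, f w)) ` ?W"
    proof clarify
      fix u w assume h: "E (f v) u" "E (f v) w" "E u w"
      have uw: "u \<in> V" "w \<in> V" using h EV by auto
      obtain u' where u': "u' \<in> V" "u = f u'" using uw fb unfolding bij_betw_def by auto
      obtain w' where w': "w' \<in> V" "w = f w'" using uw fb unfolding bij_betw_def by auto
      have "E v u'" "E v w'" "E u' w'" using h fe u' w' v by auto
      then show "(u, w) \<in> (\<lambda>(u, w). (f u, f w)) ` ?W" using u' w' by (auto simp: image_iff)
    qed
    show "(\<lambda>(u, w). (f u, f w)) ` ?W \<subseteq> ?W'"
    proof clarify
      fix u w assume h: "E v u" "E v w" "E u w"
      have uw: "u \<in> V" "w \<in> V" using h EV by auto
      show "E (f v) (f u) \<and> E (f v) (f w) \<and> E (f u) (f w)" using h fe uw v by auto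
    qed
  qed
  have inj: "inj_on (\<lambda>(u, w). (f u, f w)) ?W"
  proof (rule inj_onI, clarify)
    fix u w u' w' assume h: "E v u" "E v w" "E u w" "E v u'" "E v w'" "E u' w'" "f u = f u'" "f w = f w'"
    have "u \<in> V" "w \<in> V" "u' \<in> V" "w' \<in> V" using h EV by auto
    then show "u = u' \<and> w = w'" using h fb unfolding bij_betw_def inj_on_def by auto
  qed
  show ?thesis unfolding tri_def img using inj by (rule card_image)
qed

context con begin

definition rho' :: "'a \<Rightarrow> 'a \<times> nat \<Rightarrow> 'a \<times> nat" where
  "rho' b = (\<lambda>v. if v \<in> V0 then (fst v \<otimes> b, snd v) else v)"

lemma rho'_aut: assumes b: "b \<in> carrier G" shows "graph_aut V0 E0 (rho' b)"
  unfolding graph_aut_def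
proof (intro conjI ballI allI impI)
  show "bij_betw (rho' b) V0 V0"
  proof (rule bij_betwI[where g="rho' (inv b)"])
    show "rho' b \<in> V0 \<rightarrow> V0" using b unfolding rho'_def V0_def by auto
    show "rho' (inv b) \<in> V0 \<rightarrow> V0" using b unfolding rho'_def V0_def by auto
    show "\<And>x. x \<in> V0 \<Longrightarrow> rho' (inv b) (rho' b x) = x" using b unfolding rho'_def V0_def
      by (auto simp: m_assoc)
    show "\<And>x. x \<in> V0 \<Longrightarrow> rho' b (rho' (inv b) x) = x" using b unfolding rho'_def V0_def
      by (auto simp: m_assoc)
  qed
next
  fix x y assume xy: "x \<in> V0" "y \<in> V0"
  obtain g i where x: "x = (g, i)" by (cases x)
  obtain h j where y: "y = (h, j)" by (cases y)
  have gh: "g \<in> carrier G" "h \<in> carrier G" "i < m" "j < m" using xy x y V0_def by auto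
  have "h \<otimes> b \<otimes> inv (g \<otimes> b) = h \<otimes> inv g" using gh b by (simp add: inv_mult_group m_assoc)
  then show "E0 (rho' b x) (rho' b y) = E0 x y" using xy gh b unfolding x y rho'_def
    by (simp add: E0_iff)
next
  fix x assume "x \<notin> V0" then show "rho' b x = x" unfolding rho'_def by simp
qed

definition PP :: "'a set \<Rightarrow> 'a set \<Rightarrow> 'a set \<Rightarrow> ('a \<times> 'a) set" where
  "PP A B D = {(c, c'). c \<in> A \<and> c' \<in> B \<and> c' \<otimes> inv c \<in> D}"

definition tau :: "nat \<Rightarrow> nat" where
  "tau i = (\<Sum>j<m. \<Sum>l<m. card (PP (C i j) (C i l) (C j l)))"

lemma finPP: "A \<subseteq> carrier G \<Longrightarrow> B \<subseteq> carrier G \<Longrightarrow> finite (PP A B D)"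
proof -
  assume A: "A \<subseteq> carrier G" and B: "B \<subseteq> carrier G"
  have "PP A B D \<subseteq> carrier G \<times> carrier G" unfolding PP_def using A B by auto
  then show ?thesis using finG finite_subset by blast
qed

lemma tri_E0: assumes g: "g \<in> carrier G" and i: "i < m" shows "tri E0 (g, i) = tau i"
proof -
  let ?Z = "SIGMA j:{..<m}. SIGMA l:{..<m}. PP (C i j) (C i l) (C j l)"
  define f where "f = (\<lambda>p::nat \<times> nat \<times> 'a \<times> 'a. ((fst (snd (snd p)) \<otimes> g, fst p), (snd (snd (snd p)) \<otimes> g, fst (snd p))))"
  have img: "{(u, w). E0 (g, i) u \<and> E0 (g, i) w \<and> E0 u w} = f ` ?Z"
  proof
    show "{(u, w). E0 (g, i) u \<and> E0 (g, i) w \<and> E0 u w} \<subseteq> f ` ?Z"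
    proof
      fix x assume x: "x \<in> {(u, w). E0 (g, i) u \<and> E0 (g, i) w \<and> E0 u w}"
      obtain h j h' l where xe: "x = ((h, j), (h', l))"
        using prod.collapse by (metis surj_pair)
      have e: "E0 (g, i) (h, j)" "E0 (g, i) (h', l)" "E0 (h, j) (h', l)" using x unfolding xe by auto
      have h: "h \<in> carrier G" "j < m" "h \<otimes> inv g \<in> C i j" "h' \<in> carrier G" "l < m"
        "h' \<otimes> inv g \<in> C i l" "h' \<otimes> inv h \<in> C j l" using e unfolding E0_iff by auto
      have "h' \<otimes> inv g \<otimes> inv (h \<otimes> inv g) = h' \<otimes> inv h" using h g
        by (simp add: inv_mult_group m_assoc)
      then have zm: "(j, l, h \<otimes> inv g, h' \<otimes> inv g) \<in> ?Z" using h by (simp add: PP_def)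
      have fe: "((h, j), (h', l)) = f (j, l, h \<otimes> inv g, h' \<otimes> inv g)" using h g
        by (simp add: m_assoc f_def)
      show "x \<in> f ` ?Z" unfolding xe by (rule image_eqI[of _ f, OF fe zm])
    qed
    show "f ` ?Z \<subseteq> {(u, w). E0 (g, i) u \<and> E0 (g, i) w \<and> E0 u w}"
    proof
      fix x assume "x \<in> f ` ?Z"
      then obtain p where p: "p \<in> ?Z" "x = f p" by blast
      obtain j l c c' where pe: "p = (j, l, c, c')" by (metis surj_pair)
      have h: "j < m" "l < m" "c \<in> C i j" "c' \<in> C i l" "c' \<otimes> inv c \<in> C j l"
        using p(1) unfolding pe by (auto simp: PP_def)
      have cc: "c \<in> carrier G" "c' \<in> carrier G" using h C_car by auto
      have e1: "c \<otimes> g \<otimes> inv g = c" "c' \<otimes> g \<otimes> inv g = c'" using cc g by (simp_all add: m_assoc)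
      have e2: "c' \<otimes> g \<otimes> inv (c \<otimes> g) = c' \<otimes> inv c" using cc g by (simp add: inv_mult_group m_assoc)
      have "E0 (g, i) (c \<otimes> g, j)" unfolding E0_iff using h cc g i e1 by simp
      moreover have "E0 (g, i) (c' \<otimes> g, l)" unfolding E0_iff using h cc g i e1 by simp
      moreover have "E0 (c \<otimes> g, j) (c' \<otimes> g, l)" unfolding E0_iff using h cc g i e2 by simp
      ultimately show "x \<in> {(u, w). E0 (g, i) u \<and> E0 (g, i) w \<and> E0 u w}" using p(2) pe by (simp add: f_def)
    qed
  qed
  have inj: "inj_on f ?Z"
  proof (rule inj_onI)
    fix p q assume p: "p \<in> ?Z" and q: "q \<in> ?Z" and e: "f p = f q"
    obtain j l c c' where pe: "p = (j, l, c, c')" by (metis surj_pair)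
    obtain j' l' x x' where qe: "q = (j', l', x, x')" by (metis surj_pair)
    have "c \<in> carrier G" "c' \<in> carrier G" "x \<in> carrier G" "x' \<in> carrier G"
      using p q C_car unfolding pe qe by (auto simp: PP_def)
    then show "p = q" using e g unfolding pe qe by (simp add: f_def)
  qed
  have "tri E0 (g, i) = card ?Z" unfolding tri_def img using inj by (rule card_image)
  also have "\<dots> = (\<Sum>j<m. card (SIGMA l:{..<m}. PP (C i j) (C i l) (C j l)))"
    by (rule card_SigmaI) (auto intro!: finite_SigmaI finPP[OF C_sub C_sub])
  also have "\<dots> = tau i" unfolding tau_def
    by (intro sum.cong refl card_SigmaI) (auto intro: finPP[OF C_sub C_sub])
  finally show ?thesis .
qed

end

context con begin

lemma inv_div: "x \<in> carrier G \<Longrightarrow> y \<in> carrier G \<Longrightarrow> inv (x \<otimes> inv y) = y \<otimes> inv x"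
  by (simp add: inv_mult_group)

lemma PP_swap: assumes A: "A \<subseteq> carrier G" and B: "B \<subseteq> carrier G" and D: "D \<subseteq> carrier G"
  shows "card (PP B A (invs D)) = card (PP A B D)"
proof (rule card_eq_witness[where f="\<lambda>(c, c'). (c', c)" and g="\<lambda>(c, c'). (c', c)"])
  fix x assume x: "x \<in> PP B A (invs D)"
  obtain c c' where xe: "x = (c, c')" by (cases x)
  have h: "c \<in> B" "c' \<in> A" "c' \<otimes> inv c \<in> invs D" using x xe by (auto simp: PP_def)
  have cc: "c \<in> carrier G" "c' \<in> carrier G" using h A B by auto
  have "inv (c' \<otimes> inv c) \<in> D" using h(3) mem_invs[OF D] cc by simp
  then have "c \<otimes> inv c' \<in> D" using inv_div[OF cc(2) cc(1)] by simp
  then show "(case x of (c, c') \<Rightarrow> (c', c)) \<in> PP A B D" using xe h by (simp add: PP_def)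
next
  fix y assume y: "y \<in> PP A B D"
  obtain c c' where ye: "y = (c, c')" by (cases y)
  have h: "c \<in> A" "c' \<in> B" "c' \<otimes> inv c \<in> D" using y ye by (auto simp: PP_def)
  have cc: "c \<in> carrier G" "c' \<in> carrier G" using h A B by auto
  have "inv (c \<otimes> inv c') \<in> D" using h(3) inv_div[OF cc] by simp
  then have "c \<otimes> inv c' \<in> invs D" using mem_invs[OF D] cc by simp
  then show "(case y of (c, c') \<Rightarrow> (c', c)) \<in> PP B A (invs D)" using ye h by (simp add: PP_def)
qed auto

definition AL :: "'a set \<Rightarrow> ('a \<times> 'a) set" where
  "AL Q = {(s, s'). s \<in> Q \<and> s' \<in> Q \<and> inv s \<otimes> s' \<in> R}"

lemma card_PP_R: assumes Q: "Q \<subseteq> carrier G" shows "card (PP R Q Q) = card (AL Q)"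
proof (rule card_eq_witness[where f="\<lambda>(c, c'). (c' \<otimes> inv c, c')" and g="\<lambda>(s, s'). (inv s \<otimes> s', s')"])
  fix x assume x: "x \<in> PP R Q Q"
  obtain c c' where xe: "x = (c, c')" by (cases x)
  have h: "c \<in> R" "c' \<in> Q" "c' \<otimes> inv c \<in> Q" using x xe by (auto simp: PP_def)
  have cc: "c \<in> carrier G" "c' \<in> carrier G" using h Q Rsub by auto
  have "inv (c' \<otimes> inv c) \<otimes> c' = c" using cc by (simp add: inv_mult_group m_assoc)
  then show "(case x of (c, c') \<Rightarrow> (c' \<otimes> inv c, c')) \<in> AL Q" using xe h by (simp add: AL_def)
  show "(case (case x of (c, c') \<Rightarrow> (c' \<otimes> inv c, c')) of (s, s') \<Rightarrow> (inv s \<otimes> s', s')) = x"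
    using xe cc by (simp add: inv_mult_group m_assoc)
next
  fix y assume y: "y \<in> AL Q"
  obtain s s' where ye: "y = (s, s')" by (cases y)
  have h: "s \<in> Q" "s' \<in> Q" "inv s \<otimes> s' \<in> R" using y ye by (auto simp: AL_def)
  have cc: "s \<in> carrier G" "s' \<in> carrier G" using h Q by auto
  have "s' \<otimes> inv (inv s \<otimes> s') = s" using cc by (simp add: inv_mult_group m_assoc)
  then show "(case y of (s, s') \<Rightarrow> (inv s \<otimes> s', s')) \<in> PP R Q Q" using ye h by (simp add: PP_def)
  show "(case (case y of (s, s') \<Rightarrow> (inv s \<otimes> s', s')) of (c, c') \<Rightarrow> (c' \<otimes> inv c, c')) = y"
    using ye cc by (simp add: inv_mult_group m_assoc)
qed

lemma card_AL_invs: assumes Q: "Q \<subseteq> carrier G" shows "card (AL (invs Q)) = card (PP Q Q R)"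
proof (rule card_eq_witness[where f="\<lambda>(p, q). (inv q, inv p)" and g="\<lambda>(s, s'). (inv s', inv s)"])
  fix x assume x: "x \<in> AL (invs Q)"
  obtain p q where xe: "x = (p, q)" by (cases x)
  have h: "p \<in> invs Q" "q \<in> invs Q" "inv p \<otimes> q \<in> R" using x xe by (auto simp: AL_def)
  have cc: "p \<in> carrier G" "q \<in> carrier G" using h invs_sub[OF Q] by auto
  have "inv q \<in> Q" "inv p \<in> Q" using h mem_invs[OF Q] cc by auto
  then show "(case x of (p, q) \<Rightarrow> (inv q, inv p)) \<in> PP Q Q R" using xe h cc by (simp add: PP_def)
  show "(case (case x of (p, q) \<Rightarrow> (inv q, inv p)) of (s, s') \<Rightarrow> (inv s', inv s)) = x"
    using xe cc by simp
next
  fix y assume y: "y \<in> PP Q Q R"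
  obtain s s' where ye: "y = (s, s')" by (cases y)
  have h: "s \<in> Q" "s' \<in> Q" "s' \<otimes> inv s \<in> R" using y ye by (auto simp: PP_def)
  have cc: "s \<in> carrier G" "s' \<in> carrier G" using h Q by auto
  have "inv s' \<in> invs Q" "inv s \<in> invs Q" using h mem_invs[OF Q] cc by auto
  then show "(case y of (s, s') \<Rightarrow> (inv s', inv s)) \<in> AL (invs Q)" using ye h cc by (simp add: AL_def)
  show "(case (case y of (s, s') \<Rightarrow> (inv s', inv s)) of (p, q) \<Rightarrow> (inv q, inv p)) = y"
    using ye cc by simp
qed

lemma T_cases: "s \<in> T \<Longrightarrow> s = \<one> \<or> s = a \<or> s = a \<otimes> r" unfolding T_def by auto

lemma tw2: "a \<otimes> inv (a \<otimes> r) \<notin> R"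
proof
  have f4: "a \<otimes> inv (a \<otimes> r) = inv (a \<otimes> r \<otimes> inv a)" using a_car r_car by (simp add: inv_mult_group m_assoc)
  assume "a \<otimes> inv (a \<otimes> r) \<in> R"
  then have "inv (inv (a \<otimes> r \<otimes> inv a)) \<in> R" using f4 Rinv by simp
  then show False using tw a_car r_car by simp
qed

lemma AL_T_char: assumes s: "s \<in> T" and s': "s' \<in> T"
  shows "(inv s \<otimes> s' \<in> R) = (s' \<otimes> inv s \<in> R \<or> (s = a \<and> s' = a \<otimes> r) \<or> (s = a \<otimes> r \<and> s' = a))"
proof -
  have ar: "a \<otimes> r \<in> carrier G" using a_car r_car by simp
  have f1: "inv a \<otimes> (a \<otimes> r) = r" using a_car r_car by simp
  have f3: "inv (a \<otimes> r) \<otimes> a = inv r" using a_car r_car by (simp add: inv_mult_group m_assoc)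
  have f4: "a \<otimes> inv (a \<otimes> r) = inv (a \<otimes> r \<otimes> inv a)" using a_car r_car by (simp add: inv_mult_group m_assoc)
  have f4': "a \<otimes> inv (a \<otimes> r) \<notin> R"
  proof
    assume "a \<otimes> inv (a \<otimes> r) \<in> R"
    then have "inv (inv (a \<otimes> r \<otimes> inv a)) \<in> R" using f4 Rinv by simp
    then show False using tw a_car r_car by simp
  qed
  have ir: "inv r \<in> R" using Rinv r_R by simp
  from T_cases[OF s] T_cases[OF s'] show ?thesis
    using a_ne_one ar_ne_one a_ne_ar a_car r_car ar f1 f3 f4' ir tw r_R one_notin
    by (elim disjE) (simp_all add: m_assoc)
qed

lemma AL_T_eq: "AL T = PP T T R \<union> {(a, a \<otimes> r), (a \<otimes> r, a)}"
proof -
  have "(a, a \<otimes> r) \<in> AL T" "(a \<otimes> r, a) \<in> AL T"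
    using AL_T_char[of a "a \<otimes> r"] AL_T_char[of "a \<otimes> r" a] by (auto simp: AL_def T_def)
  moreover have "AL T - {(a, a \<otimes> r), (a \<otimes> r, a)} = PP T T R"
    using AL_T_char tw tw2 by (auto simp: AL_def PP_def)
  moreover have "PP T T R \<subseteq> AL T" using AL_T_char by (auto simp: AL_def PP_def)
  ultimately show ?thesis by blast
qed

lemma card_AL_T: "card (AL T) = card (PP T T R) + 2"
proof -
  have fin: "finite (PP T T R)" by (rule finPP[OF T_sub T_sub])
  have disj: "PP T T R \<inter> {(a, a \<otimes> r), (a \<otimes> r, a)} = {}"
  proof -
    have "(a, a \<otimes> r) \<notin> PP T T R" "(a \<otimes> r, a) \<notin> PP T T R"
      using tw tw2 by (auto simp: PP_def)
    then show ?thesis by blast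
  qed
  have "card (AL T) = card (PP T T R) + card {(a, a \<otimes> r), (a \<otimes> r, a)}"
    unfolding AL_T_eq by (rule card_Un_disjoint[OF fin _ disj]) simp
  then show ?thesis using a_ne_ar by simp
qed

definition GG :: "'a set \<Rightarrow> nat" where "GG Q = card (PP Q Q R) + 2 * card (PP R Q Q)"

lemma GG_T: "GG T = GG T' + 2"
proof -
  have "GG T = card (PP T T R) + 2 * card (AL T)" unfolding GG_def using card_PP_R[OF T_sub] by simp
  moreover have "GG T' = card (AL T) + 2 * card (PP T T R)"
  proof -
    have "card (PP T' T' R) = card (AL T)"
      using card_AL_invs[OF T'_sub] invs_T' by simp
    moreover have "card (PP R T' T') = card (PP T T R)"
      using card_PP_R[OF T'_sub] card_AL_invs[OF T_sub] unfolding T'_def by simp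
    ultimately show ?thesis unfolding GG_def by simp
  qed
  ultimately show ?thesis using card_AL_T by simp
qed

end

context con begin

lemma PP_empty1: "PP {} B D = {}" unfolding PP_def by simp
lemma PP_empty2: "PP A {} D = {}" unfolding PP_def by simp

lemma tau_gen: assumes i: "i < m" and m2: "2 \<le> m"
  shows "tau i = card (PP R R R) + GG (C i (nx i)) +
    (if m = 2 then 0 else GG (C i (pv i)) + 2 * card (PP (C i (nx i)) (C i (pv i)) (C (nx i) (pv i))))"
proof -
  let ?n = "nx i" and ?p = "pv i"
  define F where "F j l = card (PP (C i j) (C i l) (C j l))" for j l
  have n: "?n < m" and p: "?p < m" using nx_lt pv_lt i by auto
  have inner: "(\<Sum>l<m. F j l) = (if m = 1 then F j i else if m = 2 then F j i + F j ?n
      else F j i + F j ?n + F j ?p)" for j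
    by (rule sum_supp[OF i]) (simp add: F_def C_out i PP_empty2)
  have outer: "(\<Sum>j<m. (\<Sum>l<m. F j l)) = (if m = 1 then (\<Sum>l<m. F i l) else if m = 2 then (\<Sum>l<m. F i l) + (\<Sum>l<m. F ?n l)
      else (\<Sum>l<m. F i l) + (\<Sum>l<m. F ?n l) + (\<Sum>l<m. F ?p l))"
    by (rule sum_supp[OF i]) (simp add: F_def C_out i PP_empty1)
  have tau_F: "tau i = (\<Sum>j<m. (\<Sum>l<m. F j l))" unfolding tau_def F_def ..
  let ?X = "C i ?n" and ?Y = "C i ?p"
  have Xs: "?X \<subseteq> carrier G" and Ys: "?Y \<subseteq> carrier G" by (rule C_sub)+
  have Fii: "F i i = card (PP R R R)" unfolding F_def by simp
  have Fin: "F i ?n = card (PP R ?X ?X)" unfolding F_def by simp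
  have Fni: "F ?n i = card (PP R ?X ?X)"
  proof -
    have "C ?n i = invs ?X" using C_sym[OF i n] .
    then have "F ?n i = card (PP ?X R (invs ?X))" unfolding F_def by simp
    also have "\<dots> = card (PP R ?X ?X)" by (rule PP_swap[OF Rsub Xs Xs])
    finally show ?thesis .
  qed
  have Fnn: "F ?n ?n = card (PP ?X ?X R)" unfolding F_def by simp
  have Fip: "F i ?p = card (PP R ?Y ?Y)" unfolding F_def by simp
  have Fpi: "F ?p i = card (PP R ?Y ?Y)"
  proof -
    have "C ?p i = invs ?Y" using C_sym[OF i p] .
    then have "F ?p i = card (PP ?Y R (invs ?Y))" unfolding F_def by simp
    also have "\<dots> = card (PP R ?Y ?Y)" by (rule PP_swap[OF Rsub Ys Ys])
    finally show ?thesis .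
  qed
  have Fpp: "F ?p ?p = card (PP ?Y ?Y R)" unfolding F_def by simp
  have Fnp: "F ?n ?p = card (PP ?X ?Y (C ?n ?p))" unfolding F_def ..
  have Fpn: "F ?p ?n = card (PP ?X ?Y (C ?n ?p))"
  proof -
    have "C ?p ?n = invs (C ?n ?p)" using C_sym[OF n p] .
    then have "F ?p ?n = card (PP ?Y ?X (invs (C ?n ?p)))" unfolding F_def by simp
    also have "\<dots> = card (PP ?X ?Y (C ?n ?p))" by (rule PP_swap[OF Xs Ys C_sub])
    finally show ?thesis .
  qed
  have m1': "m \<noteq> 1" using m2 by simp
  show ?thesis
  proof (cases "m = 2")
    case True
    have "tau i = (\<Sum>l<m. F i l) + (\<Sum>l<m. F ?n l)"
      by (simp only: tau_F outer if_not_P[OF m1'] if_P[OF True])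
    also have "\<dots> = (F i i + F i ?n) + (F ?n i + F ?n ?n)"
      by (simp only: inner if_not_P[OF m1'] if_P[OF True])
    finally have "tau i = (F i i + F i ?n) + (F ?n i + F ?n ?n)" .
    then show ?thesis unfolding if_P[OF True] GG_def using Fii Fin Fni Fnn by simp
  next
    case False
    have "tau i = (\<Sum>l<m. F i l) + (\<Sum>l<m. F ?n l) + (\<Sum>l<m. F ?p l)"
      by (simp only: tau_F outer if_not_P[OF m1'] if_not_P[OF False])
    also have "\<dots> = (F i i + F i ?n + F i ?p) + (F ?n i + F ?n ?n + F ?n ?p) + (F ?p i + F ?p ?n + F ?p ?p)"
      by (simp only: inner if_not_P[OF m1'] if_not_P[OF False])
    finally have "tau i = (F i i + F i ?n + F i ?p) + (F ?n i + F ?n ?n + F ?n ?p) + (F ?p i + F ?p ?n + F ?p ?p)" .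
    then show ?thesis unfolding if_not_P[OF False] GG_def using Fii Fin Fni Fnn Fip Fpi Fpp Fnp Fpn by simp
  qed
qed

end

context con begin

lemma PP_empty3: "PP A B {} = {}" unfolding PP_def by simp

definition W :: "('a \<times> 'a) set" where "W = {(u, v). u \<in> T \<and> v \<in> T \<and> u \<otimes> v \<in> T}"

lemma T_car: "x \<in> T \<Longrightarrow> x \<in> carrier G" using T_sub by auto
lemma T'_car: "x \<in> T' \<Longrightarrow> x \<in> carrier G" using T'_sub by auto
lemma mem_T': "x \<in> carrier G \<Longrightarrow> x \<in> T' \<longleftrightarrow> inv x \<in> T" unfolding T'_def using mem_invs[OF T_sub] by simp

lemma card_W1: "card (PP T T T) = card W"
proof (rule card_eq_witness[where f="\<lambda>(c, c'). (c' \<otimes> inv c, c)" and g="\<lambda>(u, v). (v, u \<otimes> v)"])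
  fix x assume x: "x \<in> PP T T T"
  obtain c c' where xe: "x = (c, c')" by (cases x)
  have h: "c \<in> T" "c' \<in> T" "c' \<otimes> inv c \<in> T" using x xe by (auto simp: PP_def)
  have cc: "c \<in> carrier G" "c' \<in> carrier G" using h T_car by auto
  show "(case x of (c, c') \<Rightarrow> (c' \<otimes> inv c, c)) \<in> W" using xe h cc by (simp add: W_def m_assoc)
  show "(case (case x of (c, c') \<Rightarrow> (c' \<otimes> inv c, c)) of (u, v) \<Rightarrow> (v, u \<otimes> v)) = x"
    using xe cc by (simp add: m_assoc)
next
  fix y assume y: "y \<in> W"
  obtain u v where ye: "y = (u, v)" by (cases y)
  have h: "u \<in> T" "v \<in> T" "u \<otimes> v \<in> T" using y ye by (auto simp: W_def)
  have cc: "u \<in> carrier G" "v \<in> carrier G" using h T_car by auto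
  show "(case y of (u, v) \<Rightarrow> (v, u \<otimes> v)) \<in> PP T T T" using ye h cc by (simp add: PP_def m_assoc)
  show "(case (case y of (u, v) \<Rightarrow> (v, u \<otimes> v)) of (c, c') \<Rightarrow> (c' \<otimes> inv c, c)) = y"
    using ye cc by (simp add: m_assoc)
qed

lemma card_W2: "card (PP T T' T') = card W"
proof (rule card_eq_witness[where f="\<lambda>(c, c'). (c, inv c')" and g="\<lambda>(u, v). (u, inv v)"])
  fix x assume x: "x \<in> PP T T' T'"
  obtain c c' where xe: "x = (c, c')" by (cases x)
  have h: "c \<in> T" "c' \<in> T'" "c' \<otimes> inv c \<in> T'" using x xe by (auto simp: PP_def)
  have cc: "c \<in> carrier G" "c' \<in> carrier G" using h T_car T'_car by auto
  have "inv c' \<in> T" using h(2) mem_T' cc by simp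
  moreover have "inv (c' \<otimes> inv c) \<in> T" using h(3) mem_T' cc by simp
  moreover have "inv (c' \<otimes> inv c) = c \<otimes> inv c'" using cc by (simp add: inv_mult_group)
  ultimately show "(case x of (c, c') \<Rightarrow> (c, inv c')) \<in> W" using xe h by (simp add: W_def)
  show "(case (case x of (c, c') \<Rightarrow> (c, inv c')) of (u, v) \<Rightarrow> (u, inv v)) = x"
    using xe cc by simp
next
  fix y assume y: "y \<in> W"
  obtain u v where ye: "y = (u, v)" by (cases y)
  have h: "u \<in> T" "v \<in> T" "u \<otimes> v \<in> T" using y ye by (auto simp: W_def)
  have cc: "u \<in> carrier G" "v \<in> carrier G" using h T_car by auto
  have "inv v \<in> T'" using h mem_T' cc by simp
  moreover have "inv v \<otimes> inv u \<in> T'" using h mem_T' cc by (simp add: inv_mult_group[symmetric])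
  ultimately show "(case y of (u, v) \<Rightarrow> (u, inv v)) \<in> PP T T' T'" using ye h by (simp add: PP_def)
  show "(case (case y of (u, v) \<Rightarrow> (u, inv v)) of (c, c') \<Rightarrow> (c, inv c')) = y"
    using ye cc by simp
qed

lemma card_W3: "card (PP T' T' T) = card W"
proof (rule card_eq_witness[where f="\<lambda>(c, c'). (inv c', c' \<otimes> inv c)" and g="\<lambda>(u, v). (inv (u \<otimes> v), inv u)"])
  fix x assume x: "x \<in> PP T' T' T"
  obtain c c' where xe: "x = (c, c')" by (cases x)
  have h: "c \<in> T'" "c' \<in> T'" "c' \<otimes> inv c \<in> T" using x xe by (auto simp: PP_def)
  have cc: "c \<in> carrier G" "c' \<in> carrier G" using h T'_car by auto
  have "inv c' \<in> T" "inv c \<in> T" using h mem_T' cc by auto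
  moreover have "inv c' \<otimes> (c' \<otimes> inv c) = inv c" using cc by simp
  ultimately show "(case x of (c, c') \<Rightarrow> (inv c', c' \<otimes> inv c)) \<in> W" using xe h by (simp add: W_def)
  show "(case (case x of (c, c') \<Rightarrow> (inv c', c' \<otimes> inv c)) of (u, v) \<Rightarrow> (inv (u \<otimes> v), inv u)) = x"
    using xe cc by (simp add: inv_mult_group)
next
  fix y assume y: "y \<in> W"
  obtain u v where ye: "y = (u, v)" by (cases y)
  have h: "u \<in> T" "v \<in> T" "u \<otimes> v \<in> T" using y ye by (auto simp: W_def)
  have cc: "u \<in> carrier G" "v \<in> carrier G" using h T_car by auto
  have "inv (u \<otimes> v) \<in> T'" "inv u \<in> T'" using h mem_T' cc by auto
  moreover have "inv u \<otimes> inv (inv (u \<otimes> v)) = v" using cc by simp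
  ultimately show "(case y of (u, v) \<Rightarrow> (inv (u \<otimes> v), inv u)) \<in> PP T' T' T" using ye h by (simp add: PP_def)
  show "(case (case y of (u, v) \<Rightarrow> (inv (u \<otimes> v), inv u)) of (c, c') \<Rightarrow> (inv c', c' \<otimes> inv c)) = y"
    using ye cc by (simp add: inv_mult_group m_assoc)
qed

definition K :: "nat \<Rightarrow> nat" where
  "K i = card (PP (C i (nx i)) (C i (pv i)) (C (nx i) (pv i)))"

lemma K4: assumes m4: "4 \<le> m" and i: "i < m" shows "K i = 0"
proof -
  have "nx i \<noteq> pv i" using pv_ne_nx[of i] m4 i by simp
  moreover have "pv i \<noteq> nx (nx i)" using pv_ne_nxnx4 m4 i by simp
  moreover have "nx i \<noteq> nx (pv i)" using nx_pv[OF i] nx_ne[of i] m4 i by simp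
  ultimately have "C (nx i) (pv i) = {}" by (rule C_none)
  then show ?thesis unfolding K_def by (simp add: PP_empty3)
qed

lemma S0: "S 0 = T" unfolding S_def by simp
lemma S1: "S 1 = T'" unfolding S_def by simp
lemma S2: "S 2 = T" unfolding S_def by simp
lemma Sne1: "i \<noteq> 1 \<Longrightarrow> S i = T" unfolding S_def by simp

lemma K3: assumes m3: "m = 3" and i: "i < m" shows "K i = card W"
proof -
  have n: "nx i \<noteq> pv i" using pv_ne_nx[of i] m3 i by simp
  have pn: "pv i = nx (nx i)" using pv_eq_nxnx3[OF m3 i] .
  have Cnp: "C (nx i) (pv i) = S (nx i)" using C_nx_gen[OF n pn] .
  have m3': "3 \<le> m" using m3 by simp
  have m2': "2 \<le> m" using m3 by simp
  have Kf: "K i = card (PP (S i) (invs (S (pv i))) (S (nx i)))"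
    by (simp only: K_def Cnp C_nx[OF m2' i] C_pv[OF m3' i])
  have nx0: "nx 0 = 1" "pv 0 = 2" "nx 1 = 2" "pv 1 = 0" "nx 2 = 0" "pv 2 = 1"
    unfolding nx_def pv_def using m3 by simp_all
  have "i = 0 \<or> i = 1 \<or> i = 2" using i m3 by linarith
  then show ?thesis
  proof (elim disjE)
    assume "i = 0" then show ?thesis using Kf nx0 card_W2 by (simp add: S_def T'_def)
  next
    assume "i = 1" then show ?thesis using Kf nx0 card_W3 by (simp add: S_def T'_def)
  next
    assume "i = 2" then show ?thesis using Kf nx0 card_W1 by (simp add: S_def invs_T')
  qed
qed

end

context con begin

lemma Kc: assumes m3: "3 \<le> m" and i: "i < m" shows "K i = K 0"
proof (cases "m = 3")
  case True
  have "0 < m" using m3 by simp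
  then show ?thesis using K3[OF True i] K3[OF True] by simp
next
  case False
  then have m4: "4 \<le> m" using m3 by simp
  have "0 < m" using m3 by simp
  then show ?thesis using K4[OF m4 i] K4[OF m4] by simp
qed

lemma tau3: assumes m3: "3 \<le> m" and i: "i < m"
  shows "tau i = card (PP R R R) + GG (S i) + GG (invs (S (pv i))) + 2 * K 0"
proof -
  have m2: "2 \<le> m" and mn2: "m \<noteq> 2" using m3 by auto
  have "tau i = card (PP R R R) + GG (C i (nx i)) + (GG (C i (pv i)) + 2 * K i)"
    using tau_gen[OF i m2] unfolding if_not_P[OF mn2] K_def .
  then show ?thesis using C_nx[OF m2 i] C_pv[OF m3 i] Kc[OF m3 i] by simp
qed

lemma pv1: "2 \<le> m \<Longrightarrow> pv 1 = 0" unfolding pv_def by simp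
lemma pv2: assumes "2 \<le> m" shows "pv 2 = 1"
proof -
  have "(2 + m - 1) mod m = (1 + m) mod m" by simp
  also have "\<dots> = 1 mod m" by (rule mod_add_self2)
  also have "\<dots> = 1" using assms by simp
  finally show ?thesis unfolding pv_def .
qed
lemma nx1: "3 \<le> m \<Longrightarrow> nx 1 = 2" unfolding nx_def by simp

lemma tau_vals: assumes m3: "3 \<le> m"
  shows "tau 1 = card (PP R R R) + 2 * GG T' + 2 * K 0"
    and "tau 2 = card (PP R R R) + 2 * GG T + 2 * K 0"
    and "\<And>i. i < m \<Longrightarrow> i \<noteq> 1 \<Longrightarrow> i \<noteq> 2 \<Longrightarrow> tau i = card (PP R R R) + GG T + GG T' + 2 * K 0"
proof -
  have m2: "2 \<le> m" using m3 by simp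
  show "tau 1 = card (PP R R R) + 2 * GG T' + 2 * K 0"
    using tau3[OF m3, of 1] m3 pv1[OF m2] by (simp add: S_def T'_def[symmetric])
  show "tau 2 = card (PP R R R) + 2 * GG T + 2 * K 0"
    using tau3[OF m3, of 2] m3 pv2[OF m2] by (simp add: S_def invs_T')
  fix i assume i: "i < m" "i \<noteq> 1" "i \<noteq> 2"
  have "pv i \<noteq> 1"
  proof
    assume "pv i = 1"
    then have "nx (pv i) = 2" using nx1[OF m3] by simp
    then show False using nx_pv[OF i(1)] i by simp
  qed
  then show "tau i = card (PP R R R) + GG T + GG T' + 2 * K 0"
    using tau3[OF m3 i(1)] i by (simp add: S_def T'_def[symmetric])
qed

lemma tau_uniq1: assumes m3: "3 \<le> m" and j: "j < m" and e: "tau j = tau 1" shows "j = 1"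
proof (rule ccontr)
  assume j1: "j \<noteq> 1"
  show False
  proof (cases "j = 2")
    case True then show False using e tau_vals[OF m3] GG_T by simp
  next
    case False then show False using e tau_vals[OF m3] tau_vals(3)[OF m3 j j1] GG_T by simp
  qed
qed

lemma tau_uniq2: assumes m3: "3 \<le> m" and j: "j < m" and e: "tau j = tau 2" shows "j = 2"
proof (rule ccontr)
  assume j2: "j \<noteq> 2"
  show False
  proof (cases "j = 1")
    case True then show False using e tau_vals[OF m3] GG_T by simp
  next
    case False then show False using e tau_vals[OF m3] tau_vals(3)[OF m3 j False j2] GG_T by simp
  qed
qed

lemma tau_m2: assumes m2: "m = 2" shows "tau 0 \<noteq> tau 1"
proof -
  have m2': "2 \<le> m" using m2 by simp
  have "tau 0 = card (PP R R R) + GG (C 0 (nx 0))" using tau_gen[OF _ m2', of 0] m2' unfolding if_P[OF m2] by simp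
  moreover have "tau 1 = card (PP R R R) + GG (C 1 (nx 1))" using tau_gen[OF _ m2', of 1] m2' unfolding if_P[OF m2] by simp
  moreover have "C 0 (nx 0) = T" using C_nx[OF m2', of 0] m2' by (simp add: S_def)
  moreover have "C 1 (nx 1) = T'" using C_nx[OF m2', of 1] m2' by (simp add: S_def)
  ultimately show ?thesis using GG_T by simp
qed

end

context con begin

lemma V0_mem: "(g, i) \<in> V0 \<longleftrightarrow> g \<in> carrier G \<and> i < m" unfolding V0_def by simp

lemma aut_props:
  assumes s: "graph_aut V0 E0 \<sigma>"
  shows "bij_betw \<sigma> V0 V0" "\<And>x y. x \<in> V0 \<Longrightarrow> y \<in> V0 \<Longrightarrow> E0 (\<sigma> x) (\<sigma> y) \<longleftrightarrow> E0 x y"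
    "\<And>x. x \<notin> V0 \<Longrightarrow> \<sigma> x = x" "\<And>x. x \<in> V0 \<Longrightarrow> \<sigma> x \<in> V0"
    "\<And>x y. x \<in> V0 \<Longrightarrow> y \<in> V0 \<Longrightarrow> \<sigma> x = \<sigma> y \<Longrightarrow> x = y"
  using s unfolding graph_aut_def bij_betw_def inj_on_def by auto

lemma preserve: assumes s: "graph_aut V0 E0 \<sigma>" and v: "v \<in> V0"
  shows "tau (snd (\<sigma> v)) = tau (snd v)"
proof -
  have sv: "\<sigma> v \<in> V0" using aut_props(4)[OF s v] .
  obtain g i where ve: "v = (g, i)" by (cases v)
  obtain h j where se: "\<sigma> v = (h, j)" by (cases "\<sigma> v")
  have "tri E0 (\<sigma> v) = tri E0 v" by (rule tri_aut[OF sg s v])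
  moreover have "tri E0 (\<sigma> v) = tau j" using sv unfolding se by (simp add: V0_mem tri_E0)
  moreover have "tri E0 v = tau i" using v unfolding ve by (simp add: V0_mem tri_E0)
  ultimately show ?thesis using ve se by simp
qed

lemma pin:
  assumes s: "graph_aut V0 E0 \<sigma>" and p: "p < m"
    and pres: "\<And>v. v \<in> V0 \<Longrightarrow> snd (\<sigma> v) = p \<longleftrightarrow> snd v = p"
  shows "\<exists>b\<in>carrier G. \<forall>g\<in>carrier G. \<sigma> (g, p) = (g \<otimes> b, p)"
proof -
  define \<phi> where "\<phi> = (\<lambda>x. if x \<in> carrier G then fst (\<sigma> (x, p)) else x)"
  have sx: "\<sigma> (x, p) = (\<phi> x, p)" and px: "\<phi> x \<in> carrier G" if x: "x \<in> carrier G" for x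
  proof -
    have xv: "(x, p) \<in> V0" using x p by (simp add: V0_mem)
    have "snd (\<sigma> (x, p)) = p" using pres[OF xv] by simp
    moreover have "\<sigma> (x, p) \<in> V0" using aut_props(4)[OF s xv] .
    ultimately show "\<sigma> (x, p) = (\<phi> x, p)" "\<phi> x \<in> carrier G" unfolding \<phi>_def using x
      by (auto simp: V0_def)
  qed
  have inj: "inj_on \<phi> (carrier G)"
  proof (rule inj_onI)
    fix x y assume xy: "x \<in> carrier G" "y \<in> carrier G" "\<phi> x = \<phi> y"
    then have "\<sigma> (x, p) = \<sigma> (y, p)" using sx by simp
    moreover have "(x, p) \<in> V0" "(y, p) \<in> V0" using xy p by (simp_all add: V0_mem)
    ultimately have "(x, p) = (y, p)" using aut_props(5)[OF s] by blast
    then show "x = y" by simp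
  qed
  have surj: "\<phi> ` carrier G = carrier G"
  proof
    show "\<phi> ` carrier G \<subseteq> carrier G" using px by auto
    show "carrier G \<subseteq> \<phi> ` carrier G"
    proof
      fix h assume h: "h \<in> carrier G"
      then have "(h, p) \<in> V0" using p by (simp add: V0_mem)
      then obtain v where v: "v \<in> V0" "\<sigma> v = (h, p)" using aut_props(1)[OF s] unfolding bij_betw_def by force
      have "snd v = p" using pres[OF v(1)] v(2) by simp
      then obtain x where xe: "v = (x, p)" by (cases v) auto
      have x: "x \<in> carrier G" using v(1) xe by (simp add: V0_mem)
      have "\<phi> x = h" using sx[OF x] v(2) xe by simp
      then show "h \<in> \<phi> ` carrier G" using x by blast
    qed
  qed
  have aut: "graph_aut (carrier G) (cayley_adj G R) \<phi>"
    unfolding graph_aut_def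
  proof (intro conjI ballI allI impI)
    show "bij_betw \<phi> (carrier G) (carrier G)" using inj surj unfolding bij_betw_def by simp
  next
    fix x y assume xy: "x \<in> carrier G" "y \<in> carrier G"
    have xv: "(x, p) \<in> V0" "(y, p) \<in> V0" using xy p by (auto simp: V0_mem)
    have "cayley_adj G R (\<phi> x) (\<phi> y) \<longleftrightarrow> E0 (\<phi> x, p) (\<phi> y, p)"
      unfolding cay_iff E0_iff using px xy p by simp
    also have "\<dots> \<longleftrightarrow> E0 (\<sigma> (x, p)) (\<sigma> (y, p))" using sx xy by simp
    also have "\<dots> \<longleftrightarrow> E0 (x, p) (y, p)" using aut_props(2)[OF s xv] .
    also have "\<dots> \<longleftrightarrow> cayley_adj G R x y" unfolding cay_iff E0_iff using xy p by simp
    finally show "cayley_adj G R (\<phi> x) (\<phi> y) = cayley_adj G R x y" .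
  next
    fix x assume "x \<notin> carrier G" then show "\<phi> x = x" unfolding \<phi>_def by simp
  qed
  obtain b where b: "b \<in> carrier G" "\<phi> = rho b" using aut_is_rho[OF aut] by blast
  have "\<forall>g\<in>carrier G. \<sigma> (g, p) = (g \<otimes> b, p)"
  proof
    fix g assume g: "g \<in> carrier G"
    have "\<phi> g = g \<otimes> b" using b g unfolding rho_def by simp
    then show "\<sigma> (g, p) = (g \<otimes> b, p)" using sx[OF g] by simp
  qed
  then show ?thesis using b by blast
qed

lemma r_notin_T: "r \<notin> T"
proof
  assume "r \<in> T"
  then have "r = \<one> \<or> r = a \<or> r = a \<otimes> r" unfolding T_def by auto
  then show False
  proof (elim disjE)
    assume "r = \<one>" then show False using r_R one_notin by simp
  next
    assume "r = a" then have "a \<otimes> r \<otimes> inv a = r" using a_car by (simp add: m_assoc)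
    then show False using tw r_R by simp
  next
    assume "r = a \<otimes> r" then show False using a_ne_one a_car r_car by simp
  qed
qed

lemma T_stab: assumes w: "w \<in> carrier G" and st: "\<And>s. s \<in> T \<Longrightarrow> w \<otimes> s \<in> T" shows "w = \<one>"
proof -
  have oneT: "\<one> \<in> T" and aT: "a \<in> T" and arT: "a \<otimes> r \<in> T" unfolding T_def by auto
  have ar: "a \<otimes> r \<in> carrier G" using a_car r_car by simp
  have "w \<in> T" using st[OF oneT] w by simp
  then have "w = \<one> \<or> w = a \<or> w = a \<otimes> r" unfolding T_def by auto
  then show ?thesis
  proof (elim disjE)
    assume "w = \<one>" then show ?thesis .
  next
    assume wa: "w = a"
    have h1: "a \<otimes> a \<in> T" using st[OF aT] wa by simp
    have h2: "a \<otimes> (a \<otimes> r) \<in> T" using st[OF arT] wa by simp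
    have "a \<otimes> a = \<one> \<or> a \<otimes> a = a \<or> a \<otimes> a = a \<otimes> r" using h1 unfolding T_def by auto
    then show ?thesis
    proof (elim disjE)
      assume aa: "a \<otimes> a = \<one>"
      have "a \<otimes> (a \<otimes> r) = r" using aa a_car r_car by (simp add: m_assoc[symmetric])
      then show ?thesis using h2 r_notin_T by simp
    next
      assume "a \<otimes> a = a" then have "a = \<one>" using a_car by simp
      then show ?thesis using a_ne_one by simp
    next
      assume "a \<otimes> a = a \<otimes> r" then have "a = r" using a_car r_car by simp
      then have "a \<otimes> r \<otimes> inv a = r" using a_car by (simp add: m_assoc)
      then show ?thesis using tw r_R by simp
    qed
  next
    assume wa: "w = a \<otimes> r"
    have h1: "a \<otimes> r \<otimes> a \<in> T" using st[OF aT] wa by simp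
    have h2: "a \<otimes> r \<otimes> (a \<otimes> r) \<in> T" using st[OF arT] wa by simp
    have "a \<otimes> r \<otimes> a = \<one> \<or> a \<otimes> r \<otimes> a = a \<or> a \<otimes> r \<otimes> a = a \<otimes> r" using h1 unfolding T_def by auto
    then show ?thesis
    proof (elim disjE)
      assume e: "a \<otimes> r \<otimes> a = \<one>"
      have "a \<otimes> r \<otimes> (a \<otimes> r) = (a \<otimes> r \<otimes> a) \<otimes> r" using a_car r_car by (simp add: m_assoc)
      then have "a \<otimes> r \<otimes> (a \<otimes> r) = r" using e r_car by simp
      then show ?thesis using h2 r_notin_T by simp
    next
      assume "a \<otimes> r \<otimes> a = a"
      then have "a \<otimes> r \<otimes> a = \<one> \<otimes> a" using a_car by simp
      then have "a \<otimes> r = \<one>" using ar a_car by (simp del: r_one l_one)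
      then show ?thesis using ar_ne_one by simp
    next
      assume "a \<otimes> r \<otimes> a = a \<otimes> r" then have "a = \<one>" using ar a_car by simp
      then show ?thesis using a_ne_one by simp
    qed
  qed
qed

lemma one_S: "\<one> \<in> S j"
proof -
  have "\<one> \<in> T" unfolding T_def by simp
  moreover have "inv \<one> = \<one>" by simp
  ultimately have "\<one> \<in> T'" unfolding T'_def invs_def by (metis image_eqI)
  then show ?thesis using \<open>\<one> \<in> T\<close> unfolding S_def by simp
qed

lemma step:
  assumes s: "graph_aut V0 E0 \<sigma>" and m2: "2 \<le> m" and j: "j < m" and j1: "j \<noteq> 1" and b: "b \<in> carrier G"
    and Q: "\<And>g. g \<in> carrier G \<Longrightarrow> \<sigma> (g, j) = (g \<otimes> b, j)"
    and L: "\<And>g. g \<in> carrier G \<Longrightarrow> snd (\<sigma> (g, nx j)) = nx j"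
  shows "\<And>x. x \<in> carrier G \<Longrightarrow> \<sigma> (x, nx j) = (x \<otimes> b, nx j)"
proof -
  fix x assume x: "x \<in> carrier G"
  have n: "nx j < m" using nx_lt j by simp
  have xv: "(x, nx j) \<in> V0" using x n by (simp add: V0_mem)
  obtain x' where xe: "\<sigma> (x, nx j) = (x', nx j)" using L[OF x] by (metis prod.collapse)
  have x': "x' \<in> carrier G" using aut_props(4)[OF s xv] xe by (simp add: V0_mem)
  have CT: "C j (nx j) = T" using C_nx[OF m2 j] j1 by (simp add: S_def)
  define w where "w = x' \<otimes> inv b \<otimes> inv x"
  have wc: "w \<in> carrier G" unfolding w_def using x x' b by simp
  have "w \<otimes> s \<in> T" if sT: "s \<in> T" for s
  proof -
    have sc: "s \<in> carrier G" using sT T_car by simp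
    have uv: "(inv s \<otimes> x, j) \<in> V0" using sc x j by (simp add: V0_mem)
    have "x \<otimes> inv (inv s \<otimes> x) = s" using sc x by (simp add: inv_mult_group m_assoc)
    then have "E0 (inv s \<otimes> x, j) (x, nx j)" using sT CT sc x j n by (simp add: E0_iff)
    then have "E0 (\<sigma> (inv s \<otimes> x, j)) (\<sigma> (x, nx j))" using aut_props(2)[OF s uv xv] by simp
    then have "E0 (inv s \<otimes> x \<otimes> b, j) (x', nx j)" using Q[of "inv s \<otimes> x"] sc x xe by simp
    then have "x' \<otimes> inv (inv s \<otimes> x \<otimes> b) \<in> T" using CT by (simp add: E0_iff)
    moreover have "x' \<otimes> inv (inv s \<otimes> x \<otimes> b) = w \<otimes> s" unfolding w_def using sc x x' b
      by (simp add: inv_mult_group m_assoc)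
    ultimately show ?thesis by simp
  qed
  then have "w = \<one>" using T_stab[OF wc] by blast
  then have "x' \<otimes> inv b \<otimes> inv x \<otimes> x = x" unfolding w_def using x by simp
  then have "x' \<otimes> inv b = x" using x x' b by (simp add: m_assoc)
  then have "x = x' \<otimes> inv b" by simp
  then have "x' = x \<otimes> b" using x x' b inv_solve_right by blast
  then show "\<sigma> (x, nx j) = (x \<otimes> b, nx j)" using xe by simp
qed

lemma adj_layers: "E0 (g, i) (h, l) \<Longrightarrow> l = i \<or> l = nx i \<or> l = pv i"
proof (rule ccontr)
  assume e: "E0 (g, i) (h, l)" and n: "\<not> (l = i \<or> l = nx i \<or> l = pv i)"
  have "i < m" "l < m" "h \<otimes> inv g \<in> C i l" using e by (auto simp: E0_iff)
  then show False using C_out n by auto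
qed

lemma setwise:
  assumes s: "graph_aut V0 E0 \<sigma>" and m3: "3 \<le> m" and j: "j < m" and b: "b \<in> carrier G"
    and Q: "\<And>g. g \<in> carrier G \<Longrightarrow> \<sigma> (g, j) = (g \<otimes> b, j)"
    and P: "\<And>v. v \<in> V0 \<Longrightarrow> snd (\<sigma> v) = pv j \<Longrightarrow> snd v = pv j"
  shows "\<And>x. x \<in> carrier G \<Longrightarrow> snd (\<sigma> (x, nx j)) = nx j"
proof -
  fix x assume x: "x \<in> carrier G"
  have m2: "2 \<le> m" using m3 by simp
  have n: "nx j < m" using nx_lt j by simp
  have xv: "(x, nx j) \<in> V0" and xj: "(x, j) \<in> V0" using x n j by (simp_all add: V0_mem)
  have "x \<otimes> inv x \<in> C j (nx j)" using C_nx[OF m2 j] one_S x by simp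
  then have "E0 (x, j) (x, nx j)" using x j n by (simp add: E0_iff)
  then have "E0 (\<sigma> (x, j)) (\<sigma> (x, nx j))" using aut_props(2)[OF s xj xv] by simp
  then have e: "E0 (x \<otimes> b, j) (\<sigma> (x, nx j))" using Q[OF x] by simp
  obtain y l where ye: "\<sigma> (x, nx j) = (y, l)" by (cases "\<sigma> (x, nx j)")
  have y: "y \<in> carrier G" using aut_props(4)[OF s xv] ye by (simp add: V0_mem)
  have "l = j \<or> l = nx j \<or> l = pv j" using adj_layers e ye by simp
  moreover have "l \<noteq> j"
  proof
    assume lj: "l = j"
    have yb: "y \<otimes> inv b \<in> carrier G" using y b by simp
    have "\<sigma> (y \<otimes> inv b, j) = (y, j)" using Q[OF yb] y b by (simp add: m_assoc)
    then have "\<sigma> (y \<otimes> inv b, j) = \<sigma> (x, nx j)" using ye lj by simp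
    moreover have "(y \<otimes> inv b, j) \<in> V0" using yb j by (simp add: V0_mem)
    ultimately have "(y \<otimes> inv b, j) = (x, nx j)" using aut_props(5)[OF s _ xv] by blast
    then show False using nx_ne[OF m2 j] by simp
  qed
  moreover have "l \<noteq> pv j"
  proof
    assume "l = pv j"
    then have "snd (x, nx j) = pv j" using P[OF xv] ye by simp
    then show False using pv_ne_nx[OF m3 j] by simp
  qed
  ultimately show "snd (\<sigma> (x, nx j)) = nx j" using ye by simp
qed

end

context con begin

lemma Qpres:
  assumes s: "graph_aut V0 E0 \<sigma>" and b: "b \<in> carrier G" and j: "j < m"
    and Q: "\<And>g. g \<in> carrier G \<Longrightarrow> \<sigma> (g, j) = (g \<otimes> b, j)"
  shows "\<And>v. v \<in> V0 \<Longrightarrow> snd (\<sigma> v) = j \<Longrightarrow> snd v = j"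
proof -
  fix v assume v: "v \<in> V0" and sv: "snd (\<sigma> v) = j"
  obtain y where ye: "\<sigma> v = (y, j)" using sv by (metis prod.collapse)
  have y: "y \<in> carrier G" using aut_props(4)[OF s v] ye by (simp add: V0_mem)
  have yb: "y \<otimes> inv b \<in> carrier G" using y b by simp
  have "\<sigma> (y \<otimes> inv b, j) = (y, j)" using Q[OF yb] y b by (simp add: m_assoc)
  then have "\<sigma> (y \<otimes> inv b, j) = \<sigma> v" using ye by simp
  moreover have "(y \<otimes> inv b, j) \<in> V0" using yb j by (simp add: V0_mem)
  ultimately have "(y \<otimes> inv b, j) = v" using aut_props(5)[OF s _ v] by blast
  then show "snd v = j" by auto
qed

lemma layer_pres:
  assumes s: "graph_aut V0 E0 \<sigma>" and p: "p < m"
    and u: "\<And>j. j < m \<Longrightarrow> tau j = tau p \<Longrightarrow> j = p"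
  shows "\<And>v. v \<in> V0 \<Longrightarrow> snd (\<sigma> v) = p \<longleftrightarrow> snd v = p"
proof -
  fix v assume v: "v \<in> V0"
  have e: "tau (snd (\<sigma> v)) = tau (snd v)" by (rule preserve[OF s v])
  have l1: "snd (\<sigma> v) < m" using aut_props(4)[OF s v] by (auto simp: V0_def)
  have l2: "snd v < m" using v by (auto simp: V0_def)
  show "snd (\<sigma> v) = p \<longleftrightarrow> snd v = p"
  proof
    assume "snd (\<sigma> v) = p" then show "snd v = p" using u[OF l2] e by simp
  next
    assume "snd v = p" then show "snd (\<sigma> v) = p" using u[OF l1] e by simp
  qed
qed

lemma all_layers:
  assumes s: "graph_aut V0 E0 \<sigma>"
  shows "\<exists>b\<in>carrier G. \<forall>j<m. \<forall>g\<in>carrier G. \<sigma> (g, j) = (g \<otimes> b, j)"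
proof (cases "m = 1")
  case True
  have "snd (\<sigma> v) = 0 \<longleftrightarrow> snd v = 0" if v: "v \<in> V0" for v
  proof -
    have "snd v < m" "snd (\<sigma> v) < m" using v aut_props(4)[OF s v] unfolding V0_def by auto
    then show ?thesis using True by linarith
  qed
  then obtain b where b: "b \<in> carrier G" "\<forall>g\<in>carrier G. \<sigma> (g, 0) = (g \<otimes> b, 0)"
    using pin[OF s, of 0] True by auto
  then show ?thesis using True by auto
next
  case m1': False
  show ?thesis
  proof (cases "m = 2")
    case True
    have m2: "2 \<le> m" using True by simp
    have u0: "\<And>j. j < m \<Longrightarrow> tau j = tau 0 \<Longrightarrow> j = 0"
    proof -
      fix j assume "j < m" "tau j = tau 0"
      then show "j = 0" using tau_m2[OF True] True by (cases j) auto
    qed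
    have u1: "\<And>j. j < m \<Longrightarrow> tau j = tau 1 \<Longrightarrow> j = 1"
    proof -
      fix j assume "j < m" "tau j = tau 1"
      then show "j = 1" using tau_m2[OF True] True by (cases j) auto
    qed
    have p0: "0 < m" and p1: "1 < m" using True by auto
    obtain b where b: "b \<in> carrier G" "\<forall>g\<in>carrier G. \<sigma> (g, 0) = (g \<otimes> b, 0)"
      using pin[OF s p0 layer_pres[OF s p0 u0]] by auto
    have nx0: "nx 0 = 1" unfolding nx_def using True by simp
    have L: "\<And>g. g \<in> carrier G \<Longrightarrow> snd (\<sigma> (g, nx 0)) = nx 0"
      using layer_pres[OF s p1 u1] nx0 p1 by (simp add: V0_mem)
    have Q1: "\<And>g. g \<in> carrier G \<Longrightarrow> \<sigma> (g, nx 0) = (g \<otimes> b, nx 0)"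
      by (rule step[OF s m2 p0 _ b(1)]) (use b L in auto)
    have "\<forall>j<m. \<forall>g\<in>carrier G. \<sigma> (g, j) = (g \<otimes> b, j)"
    proof (intro allI impI ballI)
      fix j g assume j: "j < m" and g: "g \<in> carrier G"
      have "j = 0 \<or> j = 1" using j True by linarith
      then show "\<sigma> (g, j) = (g \<otimes> b, j)" using b Q1[OF g] nx0 g by auto
    qed
    then show ?thesis using b by blast
  next
    case False
    then have m3: "3 \<le> m" using m1 m1' by linarith
    have m2: "2 \<le> m" using m3 by simp
    have p1: "1 < m" and p2: "2 < m" using m3 by auto
    obtain b where b: "b \<in> carrier G" "\<forall>g\<in>carrier G. \<sigma> (g, 2) = (g \<otimes> b, 2)"
      using pin[OF s p2 layer_pres[OF s p2 tau_uniq2[OF m3]]] by auto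
    have pres1: "\<And>v. v \<in> V0 \<Longrightarrow> snd (\<sigma> v) = 1 \<longleftrightarrow> snd v = 1"
      by (rule layer_pres[OF s p1 tau_uniq1[OF m3]])
    have ind: "(\<forall>g\<in>carrier G. \<sigma> (g, (2 + k) mod m) = (g \<otimes> b, (2 + k) mod m)) \<and>
       (\<forall>v\<in>V0. snd (\<sigma> v) = pv ((2 + k) mod m) \<longrightarrow> snd v = pv ((2 + k) mod m))" if k: "k < m" for k
      using k
    proof (induction k)
      case 0
      have "pv 2 = 1" using pv2[OF m2] .
      then show ?case using b p2 pres1 by simp
    next
      case (Suc k)
      let ?j = "(2 + k) mod m"
      have k: "k < m" using Suc by simp
      have j: "?j < m" using m3 by simp
      have j1: "?j \<noteq> 1"
      proof
        assume e: "?j = 1"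
        show False
        proof (cases "2 + k < m")
          case True then show False using e by simp
        next
          case False
          then have "2 + k = m" using Suc by linarith
          then show False using e by simp
        qed
      qed
      have IH: "(\<forall>g\<in>carrier G. \<sigma> (g, ?j) = (g \<otimes> b, ?j)) \<and>
          (\<forall>v\<in>V0. snd (\<sigma> v) = pv ?j \<longrightarrow> snd v = pv ?j)" using Suc.IH k by blast
      have Qj: "\<And>g. g \<in> carrier G \<Longrightarrow> \<sigma> (g, ?j) = (g \<otimes> b, ?j)" using IH by blast
      have P: "\<And>v. v \<in> V0 \<Longrightarrow> snd (\<sigma> v) = pv ?j \<Longrightarrow> snd v = pv ?j" using IH by blast
      have L: "\<And>g. g \<in> carrier G \<Longrightarrow> snd (\<sigma> (g, nx ?j)) = nx ?j"
        by (rule setwise[OF s m3 j b(1) Qj P])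
      have Qn: "\<And>g. g \<in> carrier G \<Longrightarrow> \<sigma> (g, nx ?j) = (g \<otimes> b, nx ?j)"
        by (rule step[OF s m2 j j1 b(1) Qj L])
      have Pn: "\<And>v. v \<in> V0 \<Longrightarrow> snd (\<sigma> v) = pv (nx ?j) \<Longrightarrow> snd v = pv (nx ?j)"
        using Qpres[OF s b(1) j Qj] pv_nx[OF j] by simp
      have "nx ?j = (2 + Suc k) mod m" unfolding nx_def by (simp add: mod_Suc_eq)
      then show ?case using Qn Pn by simp
    qed
    have "\<forall>j<m. \<forall>g\<in>carrier G. \<sigma> (g, j) = (g \<otimes> b, j)"
    proof (intro allI impI)
      fix j assume j: "j < m"
      define k where "k = (j + m - 2) mod m"
      have k: "k < m" unfolding k_def using m3 by simp
      have "(2 + k) mod m = (2 + (j + m - 2)) mod m" unfolding k_def by (rule mod_add_right_eq)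
      also have "\<dots> = (j + m) mod m"
      proof -
        have "2 + (j + m - 2) = j + m" using m3 by linarith
        then show ?thesis by simp
      qed
      also have "\<dots> = j" using j by simp
      finally show "\<forall>g\<in>carrier G. \<sigma> (g, j) = (g \<otimes> b, j)" using ind[OF k] by auto
    qed
    then show ?thesis using b by blast
  qed
qed

end

context con begin

lemma aut_rho': assumes s: "graph_aut V0 E0 \<sigma>" shows "\<exists>b\<in>carrier G. \<sigma> = rho' b"
proof -
  obtain b where b: "b \<in> carrier G" "\<forall>j<m. \<forall>g\<in>carrier G. \<sigma> (g, j) = (g \<otimes> b, j)"
    using all_layers[OF s] by blast
  have "\<sigma> = rho' b"
  proof
    fix v show "\<sigma> v = rho' b v"
    proof (cases "v \<in> V0")
      case True
      then obtain g j where "v = (g, j)" "g \<in> carrier G" "j < m" unfolding V0_def by auto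
      then show ?thesis using b True unfolding rho'_def by simp
    next
      case False then show ?thesis using aut_props(3)[OF s] unfolding rho'_def by simp
    qed
  qed
  then show ?thesis using b by blast
qed

lemma carrier_Aut: "carrier (Aut_group V0 E0) = rho' ` carrier G"
  using aut_rho' rho'_aut by (auto simp: Aut_group_def)

lemma rho'_V0: "b \<in> carrier G \<Longrightarrow> v \<in> V0 \<Longrightarrow> rho' b v \<in> V0"
  unfolding rho'_def V0_def by auto

lemma Aut_iso: "Aut_group V0 E0 \<cong> G"
proof -
  define \<psi> where "\<psi> = (\<lambda>b. rho' (inv b))"
  have hom: "\<psi> \<in> hom G (Aut_group V0 E0)"
    unfolding hom_def
  proof (intro CollectI conjI ballI)
    show "\<psi> \<in> carrier G \<rightarrow> carrier (Aut_group V0 E0)"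
      unfolding \<psi>_def using rho'_aut by (auto simp: Aut_group_def)
    fix x y assume xy: "x \<in> carrier G" "y \<in> carrier G"
    show "\<psi> (x \<otimes> y) = \<psi> x \<otimes>\<^bsub>Aut_group V0 E0\<^esub> \<psi> y"
    proof -
      have "rho' (inv (x \<otimes> y)) v = (rho' (inv x) \<circ> rho' (inv y)) v" for v
      proof (cases "v \<in> V0")
        case True
        then show ?thesis using xy rho'_V0[of "inv y" v] unfolding rho'_def
          by (auto simp: inv_mult_group m_assoc V0_def)
      next
        case False then show ?thesis unfolding rho'_def by simp
      qed
      then show ?thesis unfolding \<psi>_def by (auto simp: Aut_group_def)
    qed
  qed
  have inj: "inj_on \<psi> (carrier G)"
  proof (rule inj_onI)
    fix x y assume xy: "x \<in> carrier G" "y \<in> carrier G" "\<psi> x = \<psi> y"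
    have v: "(\<one>, 0) \<in> V0" using m1 by (simp add: V0_mem)
    have "\<psi> x (\<one>, 0) = \<psi> y (\<one>, 0)" using xy by simp
    then have "inv x = inv y" using v xy unfolding \<psi>_def rho'_def by simp
    then have "inv (inv x) = inv (inv y)" by simp
    then show "x = y" using xy by simp
  qed
  have surj: "\<psi> ` carrier G = carrier (Aut_group V0 E0)"
  proof
    show "\<psi> ` carrier G \<subseteq> carrier (Aut_group V0 E0)" using hom unfolding hom_def by auto
    show "carrier (Aut_group V0 E0) \<subseteq> \<psi> ` carrier G"
    proof
      fix f assume "f \<in> carrier (Aut_group V0 E0)"
      then obtain b where b: "b \<in> carrier G" "f = rho' b" using carrier_Aut by auto
      then have "f = \<psi> (inv b)" unfolding \<psi>_def by simp
      then show "f \<in> \<psi> ` carrier G" using b by auto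
    qed
  qed
  have "\<psi> \<in> iso G (Aut_group V0 E0)" using hom inj surj by (auto simp: iso_def bij_betw_def)
  then have "G \<cong> Aut_group V0 E0" by (rule is_isoI)
  then show ?thesis by (rule iso_sym)
qed

lemma semireg: "semiregular_on (carrier (Aut_group V0 E0)) V0"
  unfolding semiregular_on_def
proof (intro ballI impI)
  fix f v assume f: "f \<in> carrier (Aut_group V0 E0)" and v: "v \<in> V0" and fv: "f v = v"
  obtain b where b: "b \<in> carrier G" "f = rho' b" using f carrier_Aut by auto
  obtain g j where ve: "v = (g, j)" and g: "g \<in> carrier G" using v unfolding V0_def by auto
  have "g \<otimes> b = g" using fv b v ve unfolding rho'_def by simp
  then have b1: "b = \<one>" using g b by simp
  show "f = id"
  proof
    fix x show "f x = id x" using b b1 unfolding rho'_def by (auto simp: V0_def)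
  qed
qed

lemma orbits: "card (orbits_of (carrier (Aut_group V0 E0)) V0) = m"
proof -
  have orb: "{f (g, j) |f. f \<in> carrier (Aut_group V0 E0)} = carrier G \<times> {j}"
    if gj: "g \<in> carrier G" "j < m" for g j
  proof
    show "{f (g, j) |f. f \<in> carrier (Aut_group V0 E0)} \<subseteq> carrier G \<times> {j}"
    proof
      fix x assume "x \<in> {f (g, j) |f. f \<in> carrier (Aut_group V0 E0)}"
      then obtain f where f: "f \<in> carrier (Aut_group V0 E0)" "x = f (g, j)" by blast
      obtain b where b: "b \<in> carrier G" "f = rho' b" using f(1) carrier_Aut by auto
      have "x = (g \<otimes> b, j)" using f(2) b gj unfolding rho'_def by (simp add: V0_mem)
      then show "x \<in> carrier G \<times> {j}" using gj b by simp
    qed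
    show "carrier G \<times> {j} \<subseteq> {f (g, j) |f. f \<in> carrier (Aut_group V0 E0)}"
    proof
      fix x assume "x \<in> carrier G \<times> {j}"
      then obtain h where h: "h \<in> carrier G" "x = (h, j)" by auto
      have "rho' (inv g \<otimes> h) (g, j) = (h, j)" using gj h unfolding rho'_def
        by (simp add: V0_def m_assoc[symmetric])
      then have xe: "x = rho' (inv g \<otimes> h) (g, j)" using h(2) by simp
      have "rho' (inv g \<otimes> h) \<in> carrier (Aut_group V0 E0)" using carrier_Aut gj h by auto
      then show "x \<in> {f (g, j) |f. f \<in> carrier (Aut_group V0 E0)}" using xe by blast
    qed
  qed
  have "orbits_of (carrier (Aut_group V0 E0)) V0 = (\<lambda>j. carrier G \<times> {j}) ` {..<m}"
  proof
    show "orbits_of (carrier (Aut_group V0 E0)) V0 \<subseteq> (\<lambda>j. carrier G \<times> {j}) ` {..<m}"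
      unfolding orbits_of_def using orb by (auto simp: V0_def)
    show "(\<lambda>j. carrier G \<times> {j}) ` {..<m} \<subseteq> orbits_of (carrier (Aut_group V0 E0)) V0"
    proof
      fix Ob assume "Ob \<in> (\<lambda>j. carrier G \<times> {j}) ` {..<m}"
      then obtain j where j: "j < m" "Ob = carrier G \<times> {j}" by auto
      have "(\<one>, j) \<in> V0" using j by (simp add: V0_mem)
      moreover have "Ob = {f (\<one>, j) |f. f \<in> carrier (Aut_group V0 E0)}" using orb[of \<one> j] j by simp
      ultimately show "Ob \<in> orbits_of (carrier (Aut_group V0 E0)) V0" unfolding orbits_of_def by blast
    qed
  qed
  moreover have "inj_on (\<lambda>j. carrier G \<times> {j}) {..<m}"
  proof (rule inj_onI)
    fix i j assume e: "carrier G \<times> {i} = carrier G \<times> {j}"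
    have "(\<one>, i) \<in> carrier G \<times> {i}" by simp
    then have "(\<one>, i) \<in> carrier G \<times> {j}" using e by simp
    then show "i = j" by simp
  qed
  ultimately show ?thesis by (simp add: card_image)
qed

lemma finV0: "finite V0" unfolding V0_def using finG by simp

lemma result: "admits_mGRR G m"
  by (rule transfer_mGRR[OF finV0 sg rg Aut_iso semireg orbits])

end

theorem corollary3p9:
  fixes G :: "('a, 'b) monoid_scheme" and m :: nat
  assumes "group G"
    and "finite (carrier G)"
    and "\<not> comm_group G"
    and "admits_GRR G"
    and "m \<ge> 1"
  shows "admits_mGRR G m"
proof -
  obtain R where R: "R \<subseteq> carrier G" "\<one>\<^bsub>G\<^esub> \<notin> R" "\<forall>r\<in>R. inv\<^bsub>G\<^esub> r \<in> R"
    "Aut_group (carrier G) (cayley_adj G R) \<cong> G"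
    using assms(4) unfolding admits_GRR_def by blast
  interpret grr G R
    by (rule grr.intro[OF assms(1)], unfold_locales) (use R assms(2) in auto)
  obtain a r where ar: "a \<in> carrier G" "r \<in> R" "a \<otimes>\<^bsub>G\<^esub> r \<otimes>\<^bsub>G\<^esub> inv\<^bsub>G\<^esub> a \<notin> R"
    using exists_twist[OF assms(3)] by blast
  interpret con G R a r m
    by (rule con.intro, unfold_locales) (use ar assms(5) in auto)
  show ?thesis by (rule result)
qed

end
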